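(* Let $M>0$, $T\ge1/M$, $y_0\in C^4([0,1])$, $v\in C^4([0,T])$, $\varepsilon\in(0,1)$. Let $y^\varepsilon$ solve $y_t-\varepsilon y_{xx}+My_x=0$ in $Q_T=(0,1)\times(0,T)$, $y(0,t)=v(t)$, $y(1,t)=0$, $y(x,0)=y_0(x)$; let $\widetilde P^\varepsilon$ be as in the context; let $\theta^\varepsilon$ solve $\theta_t+M\theta_x-\varepsilon\theta_{xx}=0$ in $Q_T$, $\theta(0,t)=\theta(1,t)=0$, $\theta(x,0)=\widetilde P^\varepsilon(x,0)-y_0(x)$ (with $\widetilde P^\varepsilon(x,0):=\lim_{t\to0^+}\widetilde P^\varepsilon(x,t)$); and set $z^\varepsilon=\widetilde P^\varepsilon-y^\varepsilon-\theta^\varepsilon$. There is a constant $c$ independent of $\varepsilon$ such that $$\|z^\varepsilon(0,\cdot)\|_{L^1(0,t)}\le c\,\varepsilon^2\quad\forall t\in(0,T].$$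
   Context: Notation: $\mathrm{erf}(s)=\frac{2}{\sqrt\pi}\int_0^s e^{-r^2}dr$, $\mathrm{erfc}=1-\mathrm{erf}$. Scaled variables: $w=\frac{x-Mt}{\sqrt\varepsilon}$, $z=\frac{1-x}{\varepsilon}$, $\tau=\frac{1/M-t}{\sqrt\varepsilon}$ (so $M\tau=\frac{1-Mt}{\sqrt\varepsilon}$). Constants: $c^+=y_0(0)$, $c^-=v(0)$, $d^+=y_0'(0)$, $d^-=-v'(0)/M$, $e^+=y_0''(0)$, $e^-=v''(0)/M^2$, $f^+=0$, $f^-=v''(0)/M^3$, $h^+=y_0'''(0)/6$, $h^-=-v'''(0)/(6M^3)$. For $(x,t)$ let $\sigma=+$ if $x>Mt$ and $\sigma=-$ if $x\le Mt$; for $t$ let $s=+$ if $Mt\le1$ and $s=-$ if $Mt>1$. Outer terms: $y^0(x,t)=y_0(x-Mt)$ if $x>Mt$, $=v(t-x/M)$ if $x\le Mt$; $y^1(x,t)=t\,y_0''(x-Mt)$ if $x>Mt$, $=\frac{x}{M^3}v''(t-x/M)$ if $x\le Mt$; $\partial_x y^0(1,t)=y_0'(1-Mt)$ if $Mt<1$, $=-v'(t-1/M)/M$ if $Mt>1$. Inner terms ($w\in\mathbb R$, $t>0$; subscripts $w$ denote $\partial_w$): $W^0(w,t)=c^++\frac{c^--c^+}{2}\mathrm{erfc}(\frac{w}{2\sqrt t})$; $U^0_\varepsilon(w,t)=\frac{c^--c^+}{2}e^{\frac{Mw}{\sqrt\varepsilon}+\frac{M^2t}{\varepsilon}}\mathrm{erfc}(\frac{w}{2\sqrt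 t}+\frac{M\sqrt t}{\sqrt\varepsilon})$; $W^0_\varepsilon=W^0+U^0_\varepsilon$; $W^{1/2}(w,t)=w\big(\frac{d^+-d^-}{2}\mathrm{erf}(\frac{w}{2\sqrt t})+\frac{d^++d^-}{2}\big)+(d^+-d^-)\sqrt{t/\pi}\,e^{-w^2/(4t)}$; $W^1(w,t)=(\frac{w^2}{2}+t)\big(\frac{e^+-e^-}{2}\mathrm{erf}(\frac{w}{2\sqrt t})+\frac{e^++e^-}{2}\big)+\frac{e^+-e^-}{2}w\sqrt{t/\pi}\,e^{-w^2/(4t)}$; $W^{3/2}(w,t)=(\frac{w^3}{2}+3tw)\big((h^+-h^-)\mathrm{erf}(\frac{w}{2\sqrt t})+h^++h^-\big)+(h^+-h^-)(4t+w^2)\sqrt{t/\pi}\,e^{-w^2/(4t)}-f^-\sqrt{t/\pi}\,e^{-w^2/(4t)}+\frac{f^-}{2}w\,\mathrm{erfc}(\frac{w}{2\sqrt t})$. Composite terms (with $w=\frac{x-Mt}{\sqrt\varepsilon}$): $p^0_\varepsilon=y^0(x,t)+W^0_\varepsilon(w,t)-c^\sigma$; $p^{1/2}=W^{1/2}(w,t)-d^\sigma w$; $p^1=y^1(x,t)+W^1(w,t)-e^\sigma(\frac{w^2}{2}+t)$; $p^{3/2}=W^{3/2}(w,t)-h^\sigma(w^3+6tw)-f^\sigma w$. Boundary-layer coefficients (all inner functions evaluated at $(M\tau,t)$): $a_0=y^0(1,t)+W^0_\varepsilon-c^s$; $a_{1/2}=W^{1/2}-M\tau d^s$; $b_{1/2}=W^0_{\varepsilon,w}$;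 $A=y^1(1,t)+W^1-e^s(\frac{(M\tau)^2}{2}+t)$; $B=-\partial_xy^0(1,t)-W^{1/2}_w+d^s$; $C^\varepsilon=W^0_{\varepsilon,ww}$; $\widetilde A=W^{3/2}-h^s((M\tau)^3+6tM\tau)-f^sM\tau$; $\widetilde B=-W^1_w+M\tau e^s$; $\widetilde C=W^{1/2}_{ww}$; $\widetilde D^\varepsilon=-W^0_{\varepsilon,www}$. Approximation: $\widetilde P^\varepsilon(x,t)=p^0_\varepsilon+\sqrt\varepsilon p^{1/2}+\varepsilon p^1+\varepsilon^{3/2}p^{3/2}+e^{-Mz}\big[-a_0-\sqrt\varepsilon(a_{1/2}+b_{1/2}z)+\varepsilon(-A+Bz-C^\varepsilon\frac{z^2}{2})+\varepsilon^{3/2}(-\widetilde A+\widetilde Bz-\widetilde C\frac{z^2}{2}+\widetilde D^\varepsilon\frac{z^3}{6})\big]$, for $(x,t)\in Q_T$. *)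

theory Defs
  imports "HOL-Analysis.Analysis"
begin

definition erf :: "real \<Rightarrow> real" where
  "erf s = 2 / sqrt pi * (LBINT r=ereal 0..ereal s. exp (- (r^2)))"

definition erfc :: "real \<Rightarrow> real" where
  "erfc s = 1 - erf s"

definition C4_on :: "real set \<Rightarrow> (real \<Rightarrow> real) \<Rightarrow> (real \<Rightarrow> real) \<Rightarrow> (real \<Rightarrow> real)
    \<Rightarrow> (real \<Rightarrow> real) \<Rightarrow> (real \<Rightarrow> real) \<Rightarrow> bool" where
  "C4_on S f f1 f2 f3 f4 \<longleftrightarrow>
     (\<forall>x\<in>S. (f has_real_derivative f1 x) (at x within S) \<and>
            (f1 has_real_derivative f2 x) (at x within S) \<and>
            (f2 has_real_derivative f3 x) (at x within S) \<and>
            (f3 has_real_derivative f4 x) (at x within S)) \<and>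
     continuous_on S f4"

definition W0 :: "real \<Rightarrow> real \<Rightarrow> real \<Rightarrow> real \<Rightarrow> real" where
  "W0 cp cm w t = cp + (cm - cp) / 2 * erfc (w / (2 * sqrt t))"

definition U0 :: "real \<Rightarrow> real \<Rightarrow> real \<Rightarrow> real \<Rightarrow> real \<Rightarrow> real \<Rightarrow> real" where
  "U0 M eps cp cm w t = (cm - cp) / 2 * exp (M * w / sqrt eps + M^2 * t / eps)
      * erfc (w / (2 * sqrt t) + M * sqrt t / sqrt eps)"

definition W0e :: "real \<Rightarrow> real \<Rightarrow> real \<Rightarrow> real \<Rightarrow> real \<Rightarrow> real \<Rightarrow> real" where
  "W0e M eps cp cm w t = W0 cp cm w t + U0 M eps cp cm w t"

definition W12 :: "real \<Rightarrow> real \<Rightarrow> real \<Rightarrow> real \<Rightarrow> real" where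
  "W12 dp dm w t = w * ((dp - dm) / 2 * erf (w / (2 * sqrt t)) + (dp + dm) / 2)
      + (dp - dm) * sqrt (t / pi) * exp (- (w^2) / (4 * t))"

definition W1 :: "real \<Rightarrow> real \<Rightarrow> real \<Rightarrow> real \<Rightarrow> real" where
  "W1 ep em w t = (w^2 / 2 + t) * ((ep - em) / 2 * erf (w / (2 * sqrt t)) + (ep + em) / 2)
      + (ep - em) / 2 * w * sqrt (t / pi) * exp (- (w^2) / (4 * t))"

definition W32 :: "real \<Rightarrow> real \<Rightarrow> real \<Rightarrow> real \<Rightarrow> real \<Rightarrow> real" where
  "W32 hp hm fm w t = (w^3 / 2 + 3 * t * w) * ((hp - hm) * erf (w / (2 * sqrt t)) + hp + hm)
      + (hp - hm) * (4 * t + w^2) * sqrt (t / pi) * exp (- (w^2) / (4 * t))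
      - fm * sqrt (t / pi) * exp (- (w^2) / (4 * t))
      + fm / 2 * w * erfc (w / (2 * sqrt t))"

definition Ptilde :: "real \<Rightarrow> (real \<Rightarrow> real) \<Rightarrow> (real \<Rightarrow> real) \<Rightarrow> (real \<Rightarrow> real) \<Rightarrow> (real \<Rightarrow> real)
    \<Rightarrow> (real \<Rightarrow> real) \<Rightarrow> (real \<Rightarrow> real) \<Rightarrow> (real \<Rightarrow> real) \<Rightarrow> (real \<Rightarrow> real)
    \<Rightarrow> real \<Rightarrow> real \<Rightarrow> real \<Rightarrow> real" where
  "Ptilde M y0 y0' y0'' y0''' v v' v'' v''' eps x t =
    (let cp = y0 0; cm = v 0;
         dp = y0' 0; dm = - v' 0 / M;
         ep = y0'' 0; em = v'' 0 / M^2;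
         fp = (0::real); fm = v'' 0 / M^3;
         hp = y0''' 0 / 6; hm = - v''' 0 / (6 * M^3);
         \<comment> \<open>outer terms\<close>
         Y0 = (\<lambda>x t. if x > M * t then y0 (x - M * t) else v (t - x / M));
         Y1 = (\<lambda>x t. if x > M * t then t * y0'' (x - M * t) else x / M^3 * v'' (t - x / M));
         dxY0_1 = (if M * t < 1 then y0' (1 - M * t) else - v' (t - 1 / M) / M);
         \<comment> \<open>sign sigma (for (x,t)) and s (for t)\<close>
         c\<sigma> = (if x > M * t then cp else cm);
         d\<sigma> = (if x > M * t then dp else dm);
         e\<sigma> = (if x > M * t then ep else em);
         f\<sigma> = (if x > M * t then fp else fm);
         h\<sigma> = (if x > M * t then hp else hm);
         cs = (if M * t \<le> 1 then cp else cm);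
         ds = (if M * t \<le> 1 then dp else dm);
         es = (if M * t \<le> 1 then ep else em);
         fs = (if M * t \<le> 1 then fp else fm);
         hs = (if M * t \<le> 1 then hp else hm);
         \<comment> \<open>scaled variables\<close>
         w = (x - M * t) / sqrt eps;
         z = (1 - x) / eps;
         \<tau> = (1 / M - t) / sqrt eps;
         Mt = M * \<tau>;
         \<comment> \<open>composite terms\<close>
         p0 = Y0 x t + W0e M eps cp cm w t - c\<sigma>;
         p12 = W12 dp dm w t - d\<sigma> * w;
         p1 = Y1 x t + W1 ep em w t - e\<sigma> * (w^2 / 2 + t);
         p32 = W32 hp hm fm w t - h\<sigma> * (w^3 + 6 * t * w) - f\<sigma> * w;
         \<comment> \<open>boundary-layer coefficients, inner functions at (M tau, t)\<close>
         a0 = Y0 1 t + W0e M eps cp cm Mt t - cs;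
         a12 = W12 dp dm Mt t - Mt * ds;
         b12 = deriv (\<lambda>w'. W0e M eps cp cm w' t) Mt;
         A = Y1 1 t + W1 ep em Mt t - es * (Mt^2 / 2 + t);
         B = - dxY0_1 - deriv (\<lambda>w'. W12 dp dm w' t) Mt + ds;
         C = (deriv ^^ 2) (\<lambda>w'. W0e M eps cp cm w' t) Mt;
         At = W32 hp hm fm Mt t - hs * (Mt^3 + 6 * t * Mt) - fs * Mt;
         Bt = - deriv (\<lambda>w'. W1 ep em w' t) Mt + Mt * es;
         Ct = (deriv ^^ 2) (\<lambda>w'. W12 dp dm w' t) Mt;
         Dt = - (deriv ^^ 3) (\<lambda>w'. W0e M eps cp cm w' t) Mt
     in p0 + sqrt eps * p12 + eps * p1 + eps powr (3/2) * p32
        + exp (- M * z) *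
          (- a0 - sqrt eps * (a12 + b12 * z) + eps * (- A + B * z - C * z^2 / 2)
           + eps powr (3/2) * (- At + Bt * z - Ct * z^2 / 2 + Dt * z^3 / 6)))"

text \<open>\<open>u x t\<close>; u(0,t) = g0 t, u(1,t) = g1 t for t in (0,T], u(x,0) = u0 x for x in (0,1).
  u is C^{2,1} in the open Q_T and continuous on the closure of Q_T except at the two
  corners (0,0), (1,0), where the data may be incompatible.\<close>

definition adv_diff_sol :: "real \<Rightarrow> real \<Rightarrow> real \<Rightarrow> (real \<Rightarrow> real) \<Rightarrow> (real \<Rightarrow> real)
    \<Rightarrow> (real \<Rightarrow> real) \<Rightarrow> (real \<Rightarrow> real \<Rightarrow> real) \<Rightarrow> bool" where
  "adv_diff_sol eps M T g0 g1 u0 u \<longleftrightarrow>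
     continuous_on (({0..1} \<times> {0..T}) - {(0,0), (1,0)}) (\<lambda>(x,t). u x t) \<and>
     (\<exists>ut ux uxx.
        continuous_on ({0<..<1} \<times> {0<..<T}) (\<lambda>(x,t). ut x t) \<and>
        continuous_on ({0<..<1} \<times> {0<..<T}) (\<lambda>(x,t). ux x t) \<and>
        continuous_on ({0<..<1} \<times> {0<..<T}) (\<lambda>(x,t). uxx x t) \<and>
        (\<forall>x t. 0 < x \<and> x < 1 \<and> 0 < t \<and> t < T \<longrightarrow>
           ((\<lambda>s. u x s) has_real_derivative ut x t) (at t) \<and>
           ((\<lambda>\<xi>. u \<xi> t) has_real_derivative ux x t) (at x) \<and>
           ((\<lambda>\<xi>. ux \<xi> t) has_real_derivative uxx x t) (at x) \<and>
           ut x t - eps * uxx x t + M * ux x t = 0)) \<and>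
     (\<forall>t\<in>{0<..T}. u 0 t = g0 t \<and> u 1 t = g1 t) \<and>
     (\<forall>x\<in>{0<..<1}. u x 0 = u0 x)"

end

theory Submission
  imports Defs "HOL-Probability.Distributions" "HOL-Real_Asymp.Real_Asymp"
begin


lemma erf_deriv: "(erf has_real_derivative (2 / sqrt pi * exp (- (x^2)))) (at x)"
proof -
  define a where "a = - \<bar>x\<bar> - 1"
  define b where "b = \<bar>x\<bar> + 1"
  have c: "continuous_on {a..b} (\<lambda>r::real. exp (- (r^2)))"
    by (intro continuous_intros)
  have "((\<lambda>u. LBINT y=ereal 0..ereal u. exp (- (y^2))) has_vector_derivative (exp (- (x^2)))) (at x within {a..b})"
    by (rule interval_integral_FTC2[OF _ _ c]) (auto simp: a_def b_def)
  moreover have "at x within {a..b} = at x"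
    by (rule at_within_Icc_at) (auto simp: a_def b_def)
  ultimately have "((\<lambda>u. LBINT y=ereal 0..ereal u. exp (- (y^2))) has_real_derivative (exp (- (x^2)))) (at x)"
    by (simp add: has_real_derivative_iff_has_vector_derivative)
  then have "((\<lambda>u. 2 / sqrt pi * (LBINT y=ereal 0..ereal u. exp (- (y^2)))) has_real_derivative (2 / sqrt pi * exp (- (x^2)))) (at x)"
    by (rule DERIV_cmult)
  then show ?thesis unfolding erf_def[abs_def] by simp
qed

lemma erf_deriv_chain[derivative_intros]:
  "(f has_real_derivative f') (at x within S) \<Longrightarrow>
   ((\<lambda>x. erf (f x)) has_real_derivative (2 / sqrt pi * exp (- ((f x)^2)) * f')) (at x within S)"
  using DERIV_chain2[OF erf_deriv] by blast

lemma sqrt_pi_sq[simp]: "sqrt pi * sqrt pi = pi" "sqrt pi * (sqrt pi * x) = pi * x"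
  by (simp_all add: mult.assoc[symmetric])

lemma erf_0[simp]: "erf 0 = 0"
  by (simp add: erf_def)

lemma erf_odd: "erf (- x) = - erf x"
proof -
  have "\<And>y. ((\<lambda>x. erf x + erf (- x)) has_real_derivative 0) (at y)"
  proof -
    fix y
    have "((\<lambda>x. erf x + erf (- x)) has_real_derivative (2 / sqrt pi * exp (- (y^2)) + (2 / sqrt pi * exp (- ((-y)^2))) * (-1))) (at y)"
      by (auto intro!: derivative_eq_intros erf_deriv)
    then show "?thesis y" by simp
  qed
  then have "erf x + erf (- x) = erf 0 + erf (- 0)"
    by (intro DERIV_isconst_all allI) 
  then show ?thesis by simp
qed

lemma erf_mono: "x \<le> y \<Longrightarrow> erf x \<le> erf y"
  by (rule DERIV_nonneg_imp_nondecreasing[of x y erf]) (auto intro!: exI[of _ "2 / sqrt pi * exp (- (_^2))"] erf_deriv)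

lemma erf_at_top: "(erf \<longlongrightarrow> 1) at_top"
proof -
  have g: "has_bochner_integral lborel (\<lambda>x. indicator {0..} x *\<^sub>R exp (- x\<^sup>2)) (sqrt pi / 2)"
    by (rule gaussian_moment_0)
  have si: "set_integrable lborel {0..} (\<lambda>x::real. exp (- x\<^sup>2))"
    using g unfolding set_integrable_def by (auto simp: has_bochner_integral_iff)
  have sv: "set_lebesgue_integral lborel {0..} (\<lambda>x::real. exp (- x\<^sup>2)) = sqrt pi / 2"
    using g unfolding set_lebesgue_integral_def by (auto simp: has_bochner_integral_iff)
  have "((\<lambda>b. set_lebesgue_integral lborel {0..b} (\<lambda>x::real. exp (- x\<^sup>2))) \<longlongrightarrow> sqrt pi / 2) at_top"
    using tendsto_set_lebesgue_integral_at_top[OF _ si] sv by simp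
  then have "((\<lambda>b. 2 / sqrt pi * set_lebesgue_integral lborel {0..b} (\<lambda>x::real. exp (- x\<^sup>2))) \<longlongrightarrow> 2 / sqrt pi * (sqrt pi / 2)) at_top"
    by (intro tendsto_intros)
  then have "((\<lambda>b. 2 / sqrt pi * set_lebesgue_integral lborel {0..b} (\<lambda>x::real. exp (- x\<^sup>2))) \<longlongrightarrow> 1) at_top"
    by simp
  moreover have "eventually (\<lambda>b. 2 / sqrt pi * set_lebesgue_integral lborel {0..b} (\<lambda>x::real. exp (- x\<^sup>2)) = erf b) at_top"
    using eventually_ge_at_top[of "0::real"]
    by eventually_elim (simp add: erf_def interval_integral_Icc)
  ultimately show ?thesis by (rule Lim_transform_eventually)
qed

lemma erf_le_1: "erf x \<le> 1"
  by (rule tendsto_lowerbound[OF erf_at_top]) (auto simp: eventually_at_top_linorder intro!: exI[of _ x] erf_mono)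

lemma abs_erf_le_1: "\<bar>erf x\<bar> \<le> 1"
  using erf_le_1[of x] erf_le_1[of "-x"] by (simp add: erf_odd)

lemma erfc_nonneg: "0 \<le> erfc x"
  using erf_le_1[of x] by (simp add: erfc_def)

lemma erfc_le_2: "erfc x \<le> 2"
  using abs_erf_le_1[of x] by (simp add: erfc_def)

lemma erfc_neg: "erfc (- x) = 2 - erfc x"
  by (simp add: erfc_def erf_odd)

lemma erfc_bound:
  assumes "0 < a"
  shows "erfc a \<le> exp (- (a^2)) / (a * sqrt pi)"
proof -
  define f where "f x = exp (- (x^2)) / (x * sqrt pi) - erfc x" for x
  have d: "(f has_real_derivative (- exp (- (x^2)) / (x^2 * sqrt pi))) (at x)" if "0 < x" for x
  proof -
    show ?thesis
      unfolding f_def erfc_def[abs_def] using that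
      by (auto intro!: derivative_eq_intros erf_deriv simp: power2_eq_square field_simps)
  qed
  have mono: "f y \<le> f a" if "a \<le> y" for y
  proof (rule DERIV_nonpos_imp_nonincreasing[of a y f])
    fix x assume "a \<le> x" "x \<le> y"
    then have "0 < x" using assms by auto
    show "\<exists>y. (f has_real_derivative y) (at x) \<and> y \<le> 0"
      using d[OF \<open>0 < x\<close>] \<open>0 < x\<close> by (intro exI[of _ "- (exp (- (x^2)) / (x^2 * sqrt pi))"]) auto
  qed (rule that)
  have lim: "(f \<longlongrightarrow> 0) at_top"
  proof -
    have "((\<lambda>x. exp (- (x^2)) / (x * sqrt pi)) \<longlongrightarrow> 0) at_top" by real_asymp
    moreover have "(erfc \<longlongrightarrow> 0) at_top"
      unfolding erfc_def[abs_def] using tendsto_diff[OF tendsto_const erf_at_top, of 1] by simp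
    ultimately show ?thesis unfolding f_def[abs_def] using tendsto_diff by fastforce
  qed
  have "0 \<le> f a"
    by (rule tendsto_upperbound[OF lim]) (auto simp: eventually_at_top_linorder intro!: exI[of _ a] mono)
  then show ?thesis by (simp add: f_def)
qed


lemma funpow2: "(deriv ^^ 2) f = deriv (deriv f)" by (simp add: numeral_2_eq_2)
lemma funpow3: "(deriv ^^ 3) f = deriv (deriv (deriv f))" by (simp add: numeral_3_eq_3)

lemma erfc_deriv_chain[derivative_intros]:
  "(f has_real_derivative f') (at x within S) \<Longrightarrow>
   ((\<lambda>x. erfc (f x)) has_real_derivative (- (2 / sqrt pi * exp (- ((f x)^2)) * f'))) (at x within S)"
  unfolding erfc_def by (auto intro!: derivative_eq_intros)

lemma DERIV_eqI: "(f has_real_derivative a) F \<Longrightarrow> a = b \<Longrightarrow> (f has_real_derivative b) F"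
  by simp

locale phistruct =
  fixes G0 E0 H G E :: "real \<Rightarrow> real" and \<kappa> i \<alpha> \<gamma> :: real
  assumes dG0: "\<And>w. (G0 has_real_derivative (- (\<kappa> * i * E0 w))) (at w)"
  and dE0: "\<And>w. (E0 has_real_derivative (- 2 * w * i^2 * E0 w)) (at w)"
  and dH: "\<And>w. (H has_real_derivative (\<alpha> * H w)) (at w)"
  and dG: "\<And>w. (G has_real_derivative (- (\<kappa> * i * E w))) (at w)"
  and dE: "\<And>w. (E has_real_derivative (- 2 * (w * i + \<gamma>) * i * E w)) (at w)"
begin

definition "F0 cp D w = cp + D * G0 w + D * (H w * G w)"
definition "F1 D w = D * (- (\<kappa> * i * E0 w)) + D * (H w * (\<alpha> * G w - \<kappa> * i * E w))"
definition "F2 D w = D * (2 * \<kappa> * w * i^3 * E0 w) + D * (H w * (\<alpha>^2 * G w - 2 * \<alpha> * \<kappa> * i * E w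
     + 2 * \<kappa> * (w * i + \<gamma>) * i^2 * E w))"
definition "F3 D w = D * (2 * \<kappa> * i^3 * (1 - 2 * w^2 * i^2) * E0 w) + D * (H w * (\<alpha>^3 * G w
     - 3 * \<alpha>^2 * \<kappa> * i * E w + 6 * \<alpha> * \<kappa> * (w * i + \<gamma>) * i^2 * E w
     + 2 * \<kappa> * (1 - 2 * (w * i + \<gamma>)^2) * i^3 * E w))"

lemma dF0: "(F0 cp D has_real_derivative F1 D w) (at w)"
  unfolding F0_def[abs_def] F1_def
  by (rule DERIV_eqI, (rule dG0 dE0 dH dG dE DERIV_add DERIV_const DERIV_cmult DERIV_mult)+)
     (simp add: algebra_simps)

lemma dF1: "(F1 D has_real_derivative F2 D w) (at w)"
  unfolding F1_def[abs_def] F2_def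
  by (rule DERIV_eqI, (rule dG0 dE0 dH dG dE DERIV_add DERIV_diff DERIV_minus DERIV_const DERIV_cmult DERIV_mult)+)
     (simp add: algebra_simps power2_eq_square power3_eq_cube)

lemma dF2: "(F2 D has_real_derivative F3 D w) (at w)"
  unfolding F2_def[abs_def] F3_def
  by (rule DERIV_eqI, (rule dG0 dE0 dH dG dE DERIV_add DERIV_diff DERIV_minus DERIV_const DERIV_cmult DERIV_mult DERIV_ident)+)
     (simp add: algebra_simps power2_eq_square power3_eq_cube)

lemma derivs: "deriv (F0 cp D) = F1 D" "deriv (F1 D) = F2 D" "deriv (F2 D) = F3 D"
  using dF0 dF1 dF2 by (auto intro!: ext DERIV_imp_deriv)

end


lemma decay_aux:
  assumes c: "0 < (c::real)" and y: "0 \<le> y"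
  shows "(1 + y)^n * exp (- (c * y^2)) \<le> (2 / min 1 (c / (real n + 1)))^n"
proof -
  define d where "d = c / (real n + 1)"
  have d0: "0 < d" using c by (simp add: d_def)
  define A where "A = 2 / min 1 d"
  have A0: "0 < A" using d0 by (simp add: A_def)
  have "1 + y \<le> 2 * (1 + y^2)"
  proof -
    have "0 \<le> (y - 1)^2" by simp
    then have "2 * y \<le> 1 + y^2" by (simp add: power2_eq_square algebra_simps)
    moreover have "0 \<le> y^2" by simp
    ultimately show ?thesis by (smt (verit))
  qed
  also have "\<dots> \<le> A * (1 + d * y^2)"
  proof -
    have "min 1 d * (1 + y^2) \<le> 1 + d * y^2"
    proof (cases "d \<le> 1")
      case True then show ?thesis by (simp add: min_def algebra_simps)
    next
      case False
      have "1 * y^2 \<le> d * y^2" using False by (intro mult_right_mono) auto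
      then show ?thesis using False by (simp add: min_def)
    qed
    then have "2 * (min 1 d * (1 + y^2)) \<le> 2 * (1 + d * y^2)" by simp
    moreover have "A * min 1 d = 2" using d0 by (simp add: A_def)
    ultimately show ?thesis
      by (metis (no_types, lifting) mult.assoc mult.commute mult_le_cancel_left_pos A0 divide_pos_pos zero_less_numeral
          A_def min_def d0 zero_less_one nonzero_mult_div_cancel_left)
  qed
  also have "\<dots> \<le> A * exp (d * y^2)"
    using A0 by (intro mult_left_mono exp_ge_add_one_self[THEN order_trans]) auto
  finally have 1: "1 + y \<le> A * exp (d * y^2)" .
  have "(1 + y)^n \<le> (A * exp (d * y^2))^n"
    using 1 y by (intro power_mono) auto
  also have "\<dots> = A^n * exp (real n * d * y^2)"
    by (simp add: power_mult_distrib exp_of_nat_mult[symmetric] mult.assoc)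
  finally have 2: "(1 + y)^n * exp (- (c * y^2)) \<le> A^n * exp (real n * d * y^2) * exp (- (c * y^2))"
    by (intro mult_right_mono) auto
  also have "\<dots> = A^n * exp (real n * d * y^2 - c * y^2)"
    by (simp add: exp_diff exp_minus field_simps)
  also have "\<dots> \<le> A^n * 1"
  proof -
    have "real n * d \<le> c" using c by (simp add: d_def field_simps)
    then have "real n * d * y^2 \<le> c * y^2" by (intro mult_right_mono) auto
    then show ?thesis using A0 by (intro mult_left_mono) auto
  qed
  finally show ?thesis by (simp add: A_def d_def)
qed

lemma decay:
  assumes "0 < (c::real)"
  shows "\<exists>K. \<forall>y\<ge>0. (1 + y)^n * exp (- (c * y^2)) \<le> K"
  using decay_aux[OF assms] by blast

definition pb :: "('a \<Rightarrow> real) \<Rightarrow> 'a set \<Rightarrow> nat \<Rightarrow> ('a \<Rightarrow> real) \<Rightarrow> bool" where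
  "pb B D N f \<longleftrightarrow> (\<forall>x\<in>D. 0 \<le> B x) \<and> (\<exists>A\<ge>0. \<forall>x\<in>D. \<bar>f x\<bar> \<le> A * (1 + B x)^N)"

lemma pb_const: "\<forall>x\<in>D. 0 \<le> B x \<Longrightarrow> pb B D 0 (\<lambda>x. c)"
  unfolding pb_def by (auto intro!: exI[of _ "\<bar>c\<bar>"])

lemma pb_boundedI: "\<forall>x\<in>D. 0 \<le> B x \<Longrightarrow> (\<And>x. x \<in> D \<Longrightarrow> \<bar>f x\<bar> \<le> C) \<Longrightarrow> pb B D 0 f"
  unfolding pb_def by (auto intro!: exI[of _ "\<bar>C\<bar>"]) (meson abs_ge_self order_trans)

lemma pb_base: "\<forall>x\<in>D. 0 \<le> B x \<Longrightarrow> pb B D 1 B"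
  unfolding pb_def by (auto intro!: exI[of _ 1])

lemma pb_linI: "\<forall>x\<in>D. 0 \<le> B x \<Longrightarrow> (\<And>x. x \<in> D \<Longrightarrow> \<bar>f x\<bar> \<le> C * (1 + B x)) \<Longrightarrow> pb B D 1 f"
  unfolding pb_def
proof (intro conjI, simp, intro exI[of _ "\<bar>C\<bar>"] conjI ballI)
  fix x assume "\<forall>x\<in>D. 0 \<le> B x" "\<And>x. x \<in> D \<Longrightarrow> \<bar>f x\<bar> \<le> C * (1 + B x)" "x \<in> D"
  then show "\<bar>f x\<bar> \<le> \<bar>C\<bar> * (1 + B x) ^ 1"
    by (smt (verit) mult_right_mono power_one_right)
qed simp

lemma pb_leI: "pb B D N g \<Longrightarrow> (\<And>x. x \<in> D \<Longrightarrow> \<bar>f x\<bar> \<le> \<bar>g x\<bar>) \<Longrightarrow> pb B D N f"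
  unfolding pb_def by (meson order_trans)

lemma pb_mono: "pb B D i f \<Longrightarrow> i \<le> j \<Longrightarrow> pb B D j f"
proof -
  assume f: "pb B D i f" and ij: "i \<le> j"
  then obtain A where h: "\<forall>x\<in>D. 0 \<le> B x" "A \<ge> 0" "\<forall>x\<in>D. \<bar>f x\<bar> \<le> A * (1 + B x) ^ i"
    unfolding pb_def by auto
  have "\<forall>x\<in>D. \<bar>f x\<bar> \<le> A * (1 + B x) ^ j"
  proof
    fix x assume "x \<in> D"
    then have "(1 + B x)^i \<le> (1 + B x)^j" using h ij by (intro power_increasing) auto
    then show "\<bar>f x\<bar> \<le> A * (1 + B x) ^ j" using h \<open>x \<in> D\<close> by (meson mult_left_mono order_trans)
  qed
  then show ?thesis using h unfolding pb_def by auto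
qed

lemma pb_add: "pb B D i f \<Longrightarrow> pb B D j g \<Longrightarrow> pb B D (max i j) (\<lambda>x. f x + g x)"
proof -
  assume f: "pb B D i f" and g: "pb B D j g"
  from pb_mono[OF f, of "max i j"] pb_mono[OF g, of "max i j"]
  obtain A1 A2 where h: "\<forall>x\<in>D. 0 \<le> B x" "A1 \<ge> 0" "A2 \<ge> 0"
    "\<forall>x\<in>D. \<bar>f x\<bar> \<le> A1 * (1 + B x) ^ max i j" "\<forall>x\<in>D. \<bar>g x\<bar> \<le> A2 * (1 + B x) ^ max i j"
    unfolding pb_def by auto
  show ?thesis unfolding pb_def
    using h by (intro conjI exI[of _ "A1 + A2"]) (auto simp: algebra_simps intro!: abs_triangle_ineq[THEN order_trans] add_mono)
qed

lemma pb_minus: "pb B D i f \<Longrightarrow> pb B D i (\<lambda>x. - f x)"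
  unfolding pb_def by simp

lemma pb_diff: "pb B D i f \<Longrightarrow> pb B D j g \<Longrightarrow> pb B D (max i j) (\<lambda>x. f x - g x)"
  using pb_add[of B D i f j "\<lambda>x. - g x"] pb_minus[of B D j g] by simp

lemma pb_mult: "pb B D i f \<Longrightarrow> pb B D j g \<Longrightarrow> pb B D (i + j) (\<lambda>x. f x * g x)"
proof -
  assume f: "pb B D i f" and g: "pb B D j g"
  then obtain A1 A2 where h: "\<forall>x\<in>D. 0 \<le> B x" "A1 \<ge> 0" "A2 \<ge> 0"
    "\<forall>x\<in>D. \<bar>f x\<bar> \<le> A1 * (1 + B x) ^ i" "\<forall>x\<in>D. \<bar>g x\<bar> \<le> A2 * (1 + B x) ^ j"
    unfolding pb_def by auto
  show ?thesis unfolding pb_def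
  proof (intro conjI exI[of _ "A1 * A2"] ballI)
    fix x assume x: "x \<in> D"
    have "\<bar>f x * g x\<bar> = \<bar>f x\<bar> * \<bar>g x\<bar>" by (simp add: abs_mult)
    also have "\<dots> \<le> (A1 * (1 + B x) ^ i) * (A2 * (1 + B x) ^ j)"
      using h x by (intro mult_mono) auto
    also have "\<dots> = A1 * A2 * (1 + B x) ^ (i + j)" by (simp add: power_add)
    finally show "\<bar>f x * g x\<bar> \<le> A1 * A2 * (1 + B x) ^ (i + j)" .
  qed (use h in auto)
qed

lemma pb_divc: "pb B D i f \<Longrightarrow> pb B D i (\<lambda>x. f x / c)"
  using pb_mult[of B D i f 0 "\<lambda>x. 1 / c"] pb_const[of D B "1/c"] by (simp add: pb_def)

lemma pb_pow: "pb B D i f \<Longrightarrow> pb B D (i * n) (\<lambda>x. f x ^ n)"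
proof (induction n)
  case 0 then show ?case using pb_const[of D B 1] by (simp add: pb_def)
next
  case (Suc n)
  then have "pb B D (i + i * n) (\<lambda>x. f x * f x ^ n)" by (intro pb_mult) auto
  then show ?case by (simp add: algebra_simps)
qed

lemmas pb_intros = pb_add pb_diff pb_minus pb_mult pb_divc pb_pow pb_const

lemma pb_decay:
  assumes "pb B D N g" "0 < c"
  shows "\<exists>K. \<forall>x\<in>D. \<bar>exp (- (c * (B x)^2)) * g x\<bar> \<le> K / (1 + B x)^12"
proof -
  obtain A where h: "\<forall>x\<in>D. 0 \<le> B x" "A \<ge> 0" "\<forall>x\<in>D. \<bar>g x\<bar> \<le> A * (1 + B x) ^ N"
    using assms(1) unfolding pb_def by auto
  obtain K where K: "\<forall>y\<ge>0. (1 + y)^(N + 12) * exp (- (c * y^2)) \<le> K"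
    using decay[OF assms(2)] by blast
  show ?thesis
  proof (intro exI[of _ "A * K"] ballI)
    fix x assume x: "x \<in> D"
    have p: "0 < (1 + B x)^12" using h x by auto
    have "\<bar>exp (- (c * (B x)^2)) * g x\<bar> = exp (- (c * (B x)^2)) * \<bar>g x\<bar>" by (simp add: abs_mult)
    also have "\<dots> \<le> exp (- (c * (B x)^2)) * (A * (1 + B x) ^ N)"
      using h x by (intro mult_left_mono) auto
    also have "\<dots> = A * ((1 + B x)^(N + 12) * exp (- (c * (B x)^2))) / (1 + B x)^12"
      using p by (simp add: power_add field_simps)
    also have "\<dots> \<le> A * K / (1 + B x)^12"
      using K h x p by (intro divide_right_mono mult_left_mono) auto
    finally show "\<bar>exp (- (c * (B x)^2)) * g x\<bar> \<le> A * K / (1 + B x)^12" .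
  qed
qed


definition Et :: "real \<Rightarrow> real" where "Et y = erfc y * exp (y^2)"

lemma erfc_Et: "erfc y = exp (- (y^2)) * Et y"
  by (simp add: Et_def exp_minus field_simps)

lemma powr_32: "0 < r \<Longrightarrow> (r^2) powr (3/2::real) = (r::real)^3"
proof -
  assume r: "0 < r"
  have "(r^2) powr (3/2::real) = (r powr 2) powr (3/2::real)"
    using r by (simp add: powr_numeral)
  also have "\<dots> = r powr 3" by (simp add: powr_powr)
  also have "\<dots> = r^3" using r by (simp add: powr_numeral)
  finally show ?thesis .
qed

lemma T0_id:
  assumes M: "0 < M" and r: "0 < r" and q: "0 < q"
  shows "W0e M (r^2) c1 c2 ((0 - M * q^2) / sqrt (r^2)) (q^2) - c2 = 0"
proof -
  have s1: "(0 - M * q^2) / r / (2 * q) = - (M * q / (2 * r))" using r q by (simp add: field_simps power2_eq_square)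
  have s2: "M * ((0 - M * q^2) / r) / r + M^2 * q^2 / r^2 = 0" using r q by (simp add: field_simps power2_eq_square)
  have s3: "(0 - M * q^2) / r / (2 * q) + M * q / r = M * q / (2 * r)" using r q by (simp add: field_simps power2_eq_square)
  have sr: "sqrt (r^2) = r" using r by simp
  have sq: "sqrt (q^2) = q" using q by simp
  show ?thesis
    unfolding W0e_def W0_def U0_def
    apply (simp only: sr sq s1 s2 s3 erfc_neg)
    apply (simp add: field_simps)
    done
qed

lemma T12_id:
  assumes M: "0 < M" and r: "0 < r" and q: "0 < q"
  shows "sqrt (r^2) * (W12 d1 d2 ((0 - M * q^2) / sqrt (r^2)) (q^2) - d2 * ((0 - M * q^2) / sqrt (r^2)))
    = r^2 * (exp (- ((M^2/4) * (q/r)^2)) * ((d1 - d2) * (- (M/2) * (q/r) * ((q/r) * Et (M * (q/r) / 2)) + (q/r) / sqrt pi)))"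
proof -
  have s1: "(0 - M * q^2) / r / (2 * q) = - (M * (q/r) / 2)" using r q by (simp add: field_simps power2_eq_square)
  have s2: "- (((0 - M * q^2) / r)^2) / (4 * q^2) = - ((M^2/4) * (q/r)^2)" using r q by (simp add: field_simps power2_eq_square)
  have s3: "sqrt (q^2 / pi) = q / sqrt pi" using q by (simp add: real_sqrt_divide)
  have e: "erfc (M * (q/r) / 2) = exp (- ((M^2/4) * (q/r)^2)) * Et (M * (q/r) / 2)"
    by (simp add: erfc_Et power_mult_distrib power_divide)
  have erf_e: "erf (M * (q/r) / 2) = 1 - exp (- ((M^2/4) * (q/r)^2)) * Et (M * (q/r) / 2)"
    using e by (simp add: erfc_def)
  have sr: "sqrt (r^2) = r" using r by simp
  have sq: "sqrt (q^2) = q" using q by simp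
  show ?thesis
    unfolding W12_def
    apply (simp only: sr sq s1 s2 s3 erf_odd)
    apply (simp only: erf_e)
    using r q apply (simp add: field_simps power2_eq_square)
    done
qed

lemma T1_id:
  assumes M: "0 < M" and r: "0 < r" and q: "0 < q"
  shows "r^2 * (W1 e1 e2 ((0 - M * q^2) / sqrt (r^2)) (q^2) - e2 * (((0 - M * q^2) / sqrt (r^2))^2 / 2 + q^2))
    = r^2 * (exp (- ((M^2/4) * (q/r)^2)) * (r^2 * ((e1 - e2) / 2) * ((M^2 * (q/r)^3 / 2 + (q/r)) * ((q/r) * Et (M * (q/r) / 2)) - M * (q/r)^3 / sqrt pi)))"
proof -
  have s1: "(0 - M * q^2) / r / (2 * q) = - (M * (q/r) / 2)" using r q by (simp add: field_simps power2_eq_square)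
  have s2: "- (((0 - M * q^2) / r)^2) / (4 * q^2) = - ((M^2/4) * (q/r)^2)" using r q by (simp add: field_simps power2_eq_square)
  have s3: "sqrt (q^2 / pi) = q / sqrt pi" using q by (simp add: real_sqrt_divide)
  have e: "erfc (M * (q/r) / 2) = exp (- ((M^2/4) * (q/r)^2)) * Et (M * (q/r) / 2)"
    by (simp add: erfc_Et power_mult_distrib power_divide)
  have erf_e: "erf (M * (q/r) / 2) = 1 - exp (- ((M^2/4) * (q/r)^2)) * Et (M * (q/r) / 2)"
    using e by (simp add: erfc_def)
  have sr: "sqrt (r^2) = r" using r by simp
  have sq: "sqrt (q^2) = q" using q by simp
  show ?thesis
    unfolding W1_def
    apply (simp only: sr sq s1 s2 s3 erf_odd)
    apply (simp only: erf_e)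
    using r q apply (simp add: field_simps power2_eq_square power3_eq_cube)
    done
qed

lemma T32_id:
  assumes M: "0 < M" and r: "0 < r" and p: "0 < p"
  shows "(r^2) powr (3/2) * (W32 h1 h2 f ((0 - M * (r*p)^2) / sqrt (r^2)) ((r*p)^2)
       - h2 * (((0 - M * (r*p)^2) / sqrt (r^2))^3 + 6 * (r*p)^2 * ((0 - M * (r*p)^2) / sqrt (r^2))) - f * ((0 - M * (r*p)^2) / sqrt (r^2)))
    = r^2 * (exp (- ((M^2/4) * p^2)) * ((r^2)^2 * (h1 - h2) * (- M * p * (M^2 * p^4 / 2 + 3 * p^2) * (p * Et (M * p / 2))
          + (4 * p^3 + M^2 * p^5) / sqrt pi)
        + r^2 * f * (- p / sqrt pi + M * p / 2 * (p * Et (M * p / 2)))))"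
proof -
  have s1: "(0 - M * (r*p)^2) / r / (2 * (r*p)) = - (M * p / 2)" using r p by (simp add: field_simps power2_eq_square)
  have s2: "- (((0 - M * (r*p)^2) / r)^2) / (4 * (r*p)^2) = - ((M^2/4) * p^2)" using r p by (simp add: field_simps power2_eq_square)
  have s3: "sqrt ((r*p)^2 / pi) = (r*p) / sqrt pi" using r p by (simp add: real_sqrt_divide)
  have s4: "(0 - M * (r*p)^2) / r = - (M * r * p^2)" using r p by (simp add: field_simps power2_eq_square)
  have e: "erfc (M * p / 2) = exp (- ((M^2/4) * p^2)) * Et (M * p / 2)"
    by (simp add: erfc_Et power_mult_distrib power_divide)
  have erf_e: "erf (M * p / 2) = 1 - exp (- ((M^2/4) * p^2)) * Et (M * p / 2)"
    using e by (simp add: erfc_def)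
  have sr: "sqrt (r^2) = r" using r by simp
  have sq: "sqrt ((r*p)^2) = r * p" using r p by simp
  show ?thesis
    unfolding W32_def
    apply (simp only: sr sq s1 s2 s3 erf_odd erfc_neg powr_32[OF r])
    apply (simp only: e erf_e s4)
    apply (simp add: field_simps eval_nat_numeral)
    done
qed


lemma erf_nonneg: "0 \<le> x \<Longrightarrow> 0 \<le> erf x"
  using erf_mono[of 0 x] by simp

lemma Et_nonneg: "0 \<le> Et y"
  by (simp add: Et_def erfc_nonneg)

lemma Et_le: assumes "0 \<le> y" shows "Et y \<le> 3"
proof (cases "y \<le> 1")
  case True
  have "erfc y \<le> 1" using erf_nonneg[OF assms] by (simp add: erfc_def)
  moreover have "exp (y^2) \<le> 3"
  proof -
    have "exp (y^2) \<le> exp 1" using True assms by (simp add: power_le_one)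
    moreover have "exp (1::real) \<le> 3" using exp_le by simp
    ultimately show ?thesis by linarith
  qed
  ultimately have "erfc y * exp (y^2) \<le> 1 * 3"
    by (intro mult_mono) (auto simp: erfc_nonneg)
  then show ?thesis by (simp add: Et_def)
next
  case False
  then have y: "1 < y" by simp
  have "erfc y \<le> exp (- (y^2)) / (y * sqrt pi)" using erfc_bound y by simp
  then have "Et y \<le> exp (- (y^2)) / (y * sqrt pi) * exp (y^2)"
    unfolding Et_def by (intro mult_right_mono) auto
  also have "\<dots> = 1 / (y * sqrt pi)" by (simp add: exp_minus field_simps)
  also have "\<dots> \<le> 1"
  proof -
    have "1 \<le> sqrt pi" using pi_gt3 by (simp add: real_sqrt_ge_1_iff)
    then have "1 * 1 \<le> y * sqrt pi" using y by (intro mult_mono) auto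
    then show ?thesis by simp
  qed
  finally show ?thesis by simp
qed

lemma pb_Et: "\<forall>x\<in>D. 0 \<le> B x \<Longrightarrow> \<forall>x\<in>D. 0 \<le> f x \<Longrightarrow> pb B D 0 (\<lambda>x. Et (f x))"
  by (rule pb_boundedI[where C=3]) (auto simp: Et_nonneg Et_le)

lemma pb_erf: "\<forall>x\<in>D. 0 \<le> B x \<Longrightarrow> pb B D 0 (\<lambda>x. erf (f x))"
  by (rule pb_boundedI[where C=1]) (auto simp: abs_erf_le_1)

lemma pb_erfc: "\<forall>x\<in>D. 0 \<le> B x \<Longrightarrow> pb B D 0 (\<lambda>x. erfc (f x))"
  by (rule pb_boundedI[where C=2]) (auto simp: erfc_nonneg erfc_le_2)

lemma pb_expsq: "\<forall>x\<in>D. 0 \<le> B x \<Longrightarrow> pb B D 0 (\<lambda>x. exp (- ((f x)^2)))"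
  by (rule pb_boundedI[where C=1]) auto

lemma pb_expsq2: "\<forall>x\<in>D. 0 \<le> B x \<Longrightarrow> \<forall>x\<in>D. 0 < g x \<Longrightarrow> pb B D 0 (\<lambda>x. exp (- ((f x)^2) / g x))"
  by (rule pb_boundedI[where C=1]) auto


definition "E0f t w = exp (- ((w / (2 * sqrt t))^2))"
definition "Hf M e t w = exp (M * w / sqrt e + M^2 * t / e)"
definition "Gf M e t w = erfc (w / (2 * sqrt t) + M * sqrt t / sqrt e)"
definition "Ef M e t w = exp (- ((w / (2 * sqrt t) + M * sqrt t / sqrt e)^2))"

lemma W0e_phi_q:
  assumes r: "0 < r" and q: "0 < q"
  shows "phistruct (\<lambda>w. erfc (w / (2 * sqrt (q^2)))) (E0f (q^2)) (Hf M (r^2) (q^2)) (Gf M (r^2) (q^2)) (Ef M (r^2) (q^2))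
     (2 / sqrt pi) (1 / (2 * sqrt (q^2))) (M / sqrt (r^2)) (M * sqrt (q^2) / sqrt (r^2))"
proof -
  have sq: "sqrt (q^2) = q" using q by simp
  have sr: "sqrt (r^2) = r" using r by simp
  show ?thesis
    unfolding sq sr
  proof
    fix w
    show "((\<lambda>w. erfc (w / (2 * q))) has_real_derivative - (2 / sqrt pi * (1 / (2 * q)) * E0f (q^2) w)) (at w)"
      unfolding E0f_def sq using q by (auto intro!: derivative_eq_intros)
    show "(E0f (q^2) has_real_derivative - 2 * w * (1 / (2 * q))^2 * E0f (q^2) w) (at w)"
      unfolding E0f_def[abs_def] sq using q by (auto intro!: derivative_eq_intros simp: field_simps power2_eq_square)
    show "(Hf M (r^2) (q^2) has_real_derivative M / r * Hf M (r^2) (q^2) w) (at w)"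
      unfolding Hf_def[abs_def] sr using r by (auto intro!: derivative_eq_intros simp: field_simps)
    show "(Gf M (r^2) (q^2) has_real_derivative - (2 / sqrt pi * (1 / (2 * q)) * Ef M (r^2) (q^2) w)) (at w)"
      unfolding Gf_def[abs_def] Ef_def sq sr using q by (auto intro!: derivative_eq_intros)
    show "(Ef M (r^2) (q^2) has_real_derivative - 2 * (w * (1 / (2 * q)) + M * q / r) * (1 / (2 * q)) * Ef M (r^2) (q^2) w) (at w)"
      unfolding Ef_def[abs_def] sq sr using q r by (auto intro!: derivative_eq_intros simp: field_simps power2_eq_square)
  qed
qed

lemma W0e_phi:
  assumes e: "0 < e" and t: "0 < t"
  shows "phistruct (\<lambda>w. erfc (w / (2 * sqrt t))) (E0f t) (Hf M e t) (Gf M e t) (Ef M e t)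
     (2 / sqrt pi) (1 / (2 * sqrt t)) (M / sqrt e) (M * sqrt t / sqrt e)"
proof -
  have tq: "(sqrt t)^2 = t" using t by simp
  have er: "(sqrt e)^2 = e" using e by simp
  have "phistruct (\<lambda>w. erfc (w / (2 * sqrt ((sqrt t)^2)))) (E0f ((sqrt t)^2)) (Hf M ((sqrt e)^2) ((sqrt t)^2)) (Gf M ((sqrt e)^2) ((sqrt t)^2)) (Ef M ((sqrt e)^2) ((sqrt t)^2))
     (2 / sqrt pi) (1 / (2 * sqrt ((sqrt t)^2))) (M / sqrt ((sqrt e)^2)) (M * sqrt ((sqrt t)^2) / sqrt ((sqrt e)^2))"
    using e t by (intro W0e_phi_q) auto
  then show ?thesis unfolding tq er .
qed

lemma W0e_derivs:
  fixes M e t c1 c2 w :: real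
  assumes e: "0 < e" and t: "0 < t"
  defines "\<kappa> \<equiv> 2 / sqrt pi" and "i \<equiv> 1 / (2 * sqrt t)" and "\<alpha> \<equiv> M / sqrt e" and "\<gamma> \<equiv> M * sqrt t / sqrt e"
    and "\<Delta> \<equiv> (c2 - c1) / 2"
  shows "deriv (\<lambda>w'. W0e M e c1 c2 w' t) w = \<Delta> * (- (\<kappa> * i * E0f t w)) + \<Delta> * (Hf M e t w * (\<alpha> * Gf M e t w - \<kappa> * i * Ef M e t w))"
    and "(deriv ^^ 2) (\<lambda>w'. W0e M e c1 c2 w' t) w = \<Delta> * (2 * \<kappa> * w * i^3 * E0f t w) + \<Delta> * (Hf M e t w * (\<alpha>^2 * Gf M e t w - 2 * \<alpha> * \<kappa> * i * Ef M e t w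
     + 2 * \<kappa> * (w * i + \<gamma>) * i^2 * Ef M e t w))"
    and "(deriv ^^ 3) (\<lambda>w'. W0e M e c1 c2 w' t) w = \<Delta> * (2 * \<kappa> * i^3 * (1 - 2 * w^2 * i^2) * E0f t w) + \<Delta> * (Hf M e t w * (\<alpha>^3 * Gf M e t w
     - 3 * \<alpha>^2 * \<kappa> * i * Ef M e t w + 6 * \<alpha> * \<kappa> * (w * i + \<gamma>) * i^2 * Ef M e t w
     + 2 * \<kappa> * (1 - 2 * (w * i + \<gamma>)^2) * i^3 * Ef M e t w))"
proof -
  interpret phistruct "\<lambda>w. erfc (w / (2 * sqrt t))" "E0f t" "Hf M e t" "Gf M e t" "Ef M e t" \<kappa> i \<alpha> \<gamma>
    unfolding \<kappa>_def i_def \<alpha>_def \<gamma>_def by (rule W0e_phi[OF e t])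
  have eq: "(\<lambda>w'. W0e M e c1 c2 w' t) = F0 c1 \<Delta>"
    by (rule ext, simp only: F0_def W0e_def W0_def U0_def Hf_def Gf_def \<Delta>_def)
  show "deriv (\<lambda>w'. W0e M e c1 c2 w' t) w = \<Delta> * (- (\<kappa> * i * E0f t w)) + \<Delta> * (Hf M e t w * (\<alpha> * Gf M e t w - \<kappa> * i * Ef M e t w))"
    unfolding eq derivs F1_def ..
  show "(deriv ^^ 2) (\<lambda>w'. W0e M e c1 c2 w' t) w = \<Delta> * (2 * \<kappa> * w * i^3 * E0f t w) + \<Delta> * (Hf M e t w * (\<alpha>^2 * Gf M e t w - 2 * \<alpha> * \<kappa> * i * Ef M e t w
     + 2 * \<kappa> * (w * i + \<gamma>) * i^2 * Ef M e t w))"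
    unfolding eq funpow2 derivs F2_def ..
  show "(deriv ^^ 3) (\<lambda>w'. W0e M e c1 c2 w' t) w = \<Delta> * (2 * \<kappa> * i^3 * (1 - 2 * w^2 * i^2) * E0f t w) + \<Delta> * (Hf M e t w * (\<alpha>^3 * Gf M e t w
     - 3 * \<alpha>^2 * \<kappa> * i * Ef M e t w + 6 * \<alpha> * \<kappa> * (w * i + \<gamma>) * i^2 * Ef M e t w
     + 2 * \<kappa> * (1 - 2 * (w * i + \<gamma>)^2) * i^3 * Ef M e t w))"
    unfolding eq funpow3 derivs F3_def ..
qed

lemma W12_deriv1:
  assumes t: "0 < t"
  shows "((\<lambda>w. W12 d1 d2 w t) has_real_derivative ((d1 - d2) / 2 * erf (w / (2 * sqrt t)) + (d1 + d2) / 2)) (at w)"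
proof -
  define q where "q = sqrt t"
  have q: "0 < q" "t = q^2" using t by (auto simp: q_def)
  have s3: "sqrt (q^2 / pi) = q / sqrt pi" using q by (simp add: real_sqrt_divide)
  show ?thesis
    unfolding W12_def q(2) using q(1)
    apply (simp only: s3 real_sqrt_abs abs_of_pos[OF q(1)])
    apply (rule DERIV_eqI)
     apply (auto intro!: derivative_eq_intros)[1]
    apply (simp add: field_simps power2_eq_square)
    done
qed

lemma W12_deriv2:
  assumes t: "0 < t"
  shows "(((\<lambda>w. (d1 - d2) / 2 * erf (w / (2 * sqrt t)) + (d1 + d2) / 2)) has_real_derivative
     ((d1 - d2) / 2 * (2 / sqrt pi * E0f t w * (1 / (2 * sqrt t))))) (at w)"
proof -
  have d: "((\<lambda>w. w / (2 * sqrt t)) has_real_derivative 1 / (2 * sqrt t)) (at w)"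
    using DERIV_cdivide[OF DERIV_ident, of "2 * sqrt t" w] by simp
  show ?thesis
    unfolding E0f_def
    by (rule DERIV_eqI, rule DERIV_add[OF DERIV_cmult[OF erf_deriv_chain[OF d]] DERIV_const]) simp
qed

lemma W12_derivs:
  assumes t: "0 < t"
  shows "deriv (\<lambda>w'. W12 d1 d2 w' t) w = (d1 - d2) / 2 * erf (w / (2 * sqrt t)) + (d1 + d2) / 2"
    and "(deriv ^^ 2) (\<lambda>w'. W12 d1 d2 w' t) w = (d1 - d2) / 2 * (2 / sqrt pi * E0f t w * (1 / (2 * sqrt t)))"
proof -
  have e1: "deriv (\<lambda>w'. W12 d1 d2 w' t) = (\<lambda>w. (d1 - d2) / 2 * erf (w / (2 * sqrt t)) + (d1 + d2) / 2)"
    using W12_deriv1[OF t] by (auto intro!: ext DERIV_imp_deriv)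
  then show "deriv (\<lambda>w'. W12 d1 d2 w' t) w = (d1 - d2) / 2 * erf (w / (2 * sqrt t)) + (d1 + d2) / 2" by simp
  show "(deriv ^^ 2) (\<lambda>w'. W12 d1 d2 w' t) w = (d1 - d2) / 2 * (2 / sqrt pi * E0f t w * (1 / (2 * sqrt t)))"
    unfolding funpow2 e1 using W12_deriv2[OF t] by (rule DERIV_imp_deriv)
qed

lemma W1_deriv:
  assumes t: "0 < t"
  shows "deriv (\<lambda>w'. W1 e1 e2 w' t) w = w * ((e1 - e2) / 2 * erf (w / (2 * sqrt t)) + (e1 + e2) / 2)
      + (e1 - e2) * sqrt (t / pi) * exp (- (w^2) / (4 * t))"
proof -
  define q where "q = sqrt t"
  have q: "0 < q" "t = q^2" using t by (auto simp: q_def)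
  have s3: "sqrt (q^2 / pi) = q / sqrt pi" using q by (simp add: real_sqrt_divide)
  have "((\<lambda>w. W1 e1 e2 w t) has_real_derivative w * ((e1 - e2) / 2 * erf (w / (2 * sqrt t)) + (e1 + e2) / 2)
      + (e1 - e2) * sqrt (t / pi) * exp (- (w^2) / (4 * t))) (at w)"
    unfolding W1_def q(2) using q(1)
    apply (simp only: s3 real_sqrt_abs abs_of_pos[OF q(1)])
    apply (rule DERIV_eqI)
     apply (auto intro!: derivative_eq_intros)[1]
    apply (simp add: field_simps power2_eq_square)
    done
  then show ?thesis by (rule DERIV_imp_deriv)
qed


locale setting =
  fixes M T :: real
    and y0 y0' y0'' y0''' y0'''' v v' v'' v''' v'''' :: "real \<Rightarrow> real"
  assumes M_pos: "M > 0"
    and T_ge: "T \<ge> 1 / M"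
    and y0_C4: "C4_on {0..1} y0 y0' y0'' y0''' y0''''"
    and v_C4: "C4_on {0..T} v v' v'' v''' v''''"
begin

definition "cp = y0 0"
definition "cm = v 0"
definition "dp = y0' 0"
definition "dm = - v' 0 / M"
definition "ep = y0'' 0"
definition "em = v'' 0 / M^2"
definition "fm = v'' 0 / M^3"
definition "hp = y0''' 0 / 6"
definition "hm = - v''' 0 / (6 * M^3)"
definition "Y0f x t = (if x > M * t then y0 (x - M * t) else v (t - x / M))"
definition "Y1f x t = (if x > M * t then t * y0'' (x - M * t) else x / M^3 * v'' (t - x / M))"
definition "dxY0 t = (if M * t < 1 then y0' (1 - M * t) else - v' (t - 1 / M) / M)"
definition "cs t = (if M * t \<le> 1 then cp else cm)"
definition "ds t = (if M * t \<le> 1 then dp else dm)"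
definition "es t = (if M * t \<le> 1 then ep else em)"
definition "fs t = (if M * t \<le> 1 then 0 else fm)"
definition "hs t = (if M * t \<le> 1 then hp else hm)"
definition "mm e t = M * ((1 / M - t) / sqrt e)"

definition "a0 e t = Y0f 1 t + W0e M e cp cm (mm e t) t - cs t"
definition "a12 e t = W12 dp dm (mm e t) t - mm e t * ds t"
definition "b12 e t = deriv (\<lambda>w'. W0e M e cp cm w' t) (mm e t)"
definition "AA e t = Y1f 1 t + W1 ep em (mm e t) t - es t * ((mm e t)^2 / 2 + t)"
definition "BB e t = - dxY0 t - deriv (\<lambda>w'. W12 dp dm w' t) (mm e t) + ds t"
definition "CC e t = (deriv ^^ 2) (\<lambda>w'. W0e M e cp cm w' t) (mm e t)"
definition "At e t = W32 hp hm fm (mm e t) t - hs t * ((mm e t)^3 + 6 * t * mm e t) - fs t * mm e t"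
definition "Bt e t = - deriv (\<lambda>w'. W1 ep em w' t) (mm e t) + mm e t * es t"
definition "Ct e t = (deriv ^^ 2) (\<lambda>w'. W12 dp dm w' t) (mm e t)"
definition "Dt e t = - (deriv ^^ 3) (\<lambda>w'. W0e M e cp cm w' t) (mm e t)"
definition "BL e t z = - a0 e t - sqrt e * (a12 e t + b12 e t * z) + e * (- AA e t + BB e t * z - CC e t * z^2 / 2)
   + e powr (3/2) * (- At e t + Bt e t * z - Ct e t * z^2 / 2 + Dt e t * z^3 / 6)"

lemma Ptilde0:
  assumes "0 < t"
  shows "Ptilde M y0 y0' y0'' y0''' v v' v'' v''' eps 0 t =
    v t + (W0e M eps cp cm ((0 - M * t) / sqrt eps) t - cm)
    + sqrt eps * (W12 dp dm ((0 - M * t) / sqrt eps) t - dm * ((0 - M * t) / sqrt eps))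
    + eps * (W1 ep em ((0 - M * t) / sqrt eps) t - em * (((0 - M * t) / sqrt eps)^2 / 2 + t))
    + eps powr (3/2) * (W32 hp hm fm ((0 - M * t) / sqrt eps) t - hm * (((0 - M * t) / sqrt eps)^3 + 6 * t * ((0 - M * t) / sqrt eps)) - fm * ((0 - M * t) / sqrt eps))
    + exp (- M * ((1 - 0) / eps)) * BL eps t ((1 - 0) / eps)"
proof -
  have n: "\<not> (0 > M * t)" using M_pos assms by (simp add: not_less)
  show ?thesis
    unfolding Ptilde_def Let_def BL_def a0_def a12_def b12_def AA_def BB_def CC_def At_def Bt_def Ct_def Dt_def
      cp_def cm_def dp_def dm_def ep_def em_def fm_def hp_def hm_def Y0f_def Y1f_def dxY0_def cs_def ds_def es_def fs_def hs_def mm_def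
    using n by (simp only: if_False if_P if_not_P) simp
qed

definition "D = {x. 0 < fst x \<and> fst x < 1 \<and> 0 < snd x \<and> snd x \<le> T}"
definition "pB x = sqrt (snd x) / sqrt (fst x)"
definition "gmain x = (dp - dm) * (- (M/2) * pB x * (pB x * Et (M * pB x / 2)) + pB x / sqrt pi)
  + fst x * ((ep - em) / 2) * ((M^2 * pB x^3 / 2 + pB x) * (pB x * Et (M * pB x / 2)) - M * pB x^3 / sqrt pi)
  + (fst x)^2 * (hp - hm) * (- M * pB x * (M^2 * pB x^4 / 2 + 3 * pB x^2) * (pB x * Et (M * pB x / 2))
       + (4 * pB x^3 + M^2 * pB x^5) / sqrt pi)
  + fst x * fm * (- pB x / sqrt pi + M * pB x / 2 * (pB x * Et (M * pB x / 2)))"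

definition "mainpart e t = (W0e M e cp cm ((0 - M * t) / sqrt e) t - cm)
    + sqrt e * (W12 dp dm ((0 - M * t) / sqrt e) t - dm * ((0 - M * t) / sqrt e))
    + e * (W1 ep em ((0 - M * t) / sqrt e) t - em * (((0 - M * t) / sqrt e)^2 / 2 + t))
    + e powr (3/2) * (W32 hp hm fm ((0 - M * t) / sqrt e) t - hm * (((0 - M * t) / sqrt e)^3 + 6 * t * ((0 - M * t) / sqrt e)) - fm * ((0 - M * t) / sqrt e))"

lemma main_id:
  assumes x: "x \<in> D"
  shows "mainpart (fst x) (snd x) = fst x * (exp (- ((M^2/4) * (pB x)^2)) * gmain x)"
proof -
  obtain e t where xe: "x = (e, t)" by (cases x)
  have e: "0 < e" and t: "0 < t" using x by (auto simp: D_def xe)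
  define r where "r = sqrt e"
  define p where "p = sqrt t / sqrt e"
  have r: "0 < r" and p: "0 < p" using e t by (auto simp: r_def p_def)
  have er: "e = r^2" using e by (simp add: r_def)
  have tr: "t = (r*p)^2" using e t by (simp add: r_def p_def power_mult_distrib)
  have rp: "r * p / r = p" using r by simp
  have pBx: "pB (e, t) = p" by (simp add: pB_def p_def)
  note i0 = T0_id[OF M_pos r mult_pos_pos[OF r p], of cp cm]
  note i12 = T12_id[OF M_pos r mult_pos_pos[OF r p], of dp dm, unfolded rp]
  note i1 = T1_id[OF M_pos r mult_pos_pos[OF r p], of ep em, unfolded rp]
  note i32 = T32_id[OF M_pos r p, of hp hm fm]
  show ?thesis
    unfolding xe fst_conv snd_conv mainpart_def gmain_def pBx
    apply (simp only: er tr i0 i12 i1 i32)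
    apply (simp add: algebra_simps)
    done
qed

lemma pB_nn: "\<forall>x\<in>D. 0 \<le> pB x"
  by (auto simp: D_def pB_def)

lemma pb_fst: "pb B D 0 (\<lambda>x. fst x)" if "\<forall>x\<in>D. 0 \<le> B x"
  by (rule pb_boundedI[where C=1]) (use that in \<open>auto simp: D_def\<close>)

lemma gmain_pb: "\<exists>N. pb pB D N gmain"
proof -
  have h: "\<forall>x\<in>D. 0 \<le> M * pB x / 2" using pB_nn M_pos by auto
  show ?thesis
    unfolding gmain_def[abs_def]
    apply (rule exI)
    apply (rule pB_nn h pb_Et pb_fst pb_base pb_intros)+
    done
qed

lemma main_bound: "\<exists>K. \<forall>x\<in>D. \<bar>mainpart (fst x) (snd x)\<bar> \<le> K * (fst x)^3 / (fst x + snd x)^2"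
proof -
  obtain N where "pb pB D N gmain" using gmain_pb by blast
  from pb_decay[OF this, of "M^2/4"] M_pos obtain K where
    K: "\<forall>x\<in>D. \<bar>exp (- ((M^2/4) * (pB x)^2)) * gmain x\<bar> \<le> K / (1 + pB x)^12" by auto
  show ?thesis
  proof (intro exI[of _ K] ballI)
    fix x :: "real \<times> real" assume x: "x \<in> D"
    define e t where "e = fst x" and "t = snd x"
    have e: "0 < e" and t: "0 < t" using x by (auto simp: D_def e_def t_def)
    have p0: "0 \<le> pB x" using pB_nn x by auto
    have p2: "(pB x)^2 = t / e" using e t by (simp add: pB_def e_def t_def power_divide)
    have K0: "0 \<le> K"
    proof -
      have "0 \<le> K / (1 + pB x)^12" using K x by (meson abs_ge_zero order_trans)
      moreover have "0 < (1 + pB x)^12" using p0 by simp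
      ultimately show ?thesis by (simp add: zero_le_divide_iff)
    qed
    have "(1 + (pB x)^2)^2 \<le> (1 + pB x)^12"
    proof -
      have "1 + (pB x)^2 \<le> (1 + pB x)^2" using p0 by (simp add: power2_eq_square algebra_simps)
      then have "(1 + (pB x)^2)^2 \<le> ((1 + pB x)^2)^2" by (intro power_mono) auto
      also have "\<dots> \<le> (1 + pB x)^12"
        unfolding power_mult[symmetric] using p0 by (intro power_increasing) auto
      finally show ?thesis .
    qed
    moreover have "1 + (pB x)^2 = (e + t) / e" using e p2 by (simp add: field_simps)
    ultimately have le: "((e + t) / e)^2 \<le> (1 + pB x)^12" by simp
    have "\<bar>mainpart e t\<bar> = e * \<bar>exp (- ((M^2/4) * (pB x)^2)) * gmain x\<bar>"
      using main_id[OF x] e by (simp add: e_def t_def abs_mult)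
    also have "\<dots> \<le> e * (K / (1 + pB x)^12)"
      using K x e by (intro mult_left_mono) auto
    also have "\<dots> \<le> e * (K / ((e + t) / e)^2)"
      using le e t K0 by (intro mult_left_mono divide_left_mono) (auto intro!: mult_pos_pos)
    also have "\<dots> = K * e^3 / (e + t)^2"
      using e t by (simp add: field_simps power2_eq_square power3_eq_cube)
    finally show "\<bar>mainpart (fst x) (snd x)\<bar> \<le> K * (fst x)^3 / (fst x + snd x)^2"
      by (simp add: e_def t_def)
  qed
qed

definition "LB x = 1 / sqrt (fst x)"
definition "bB x = (1 + M * snd x) / (2 * sqrt (fst x) * sqrt (snd x))"
definition "mx x = mm (fst x) (snd x)"
definition "iB x = 1 / (2 * sqrt (snd x))"
definition "aB x = M / sqrt (fst x)"

lemma bl_alg: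
  assumes e: "0 < e" and t: "0 < t"
  defines "m \<equiv> mm e t" and "b \<equiv> (1 + M * t) / (2 * sqrt e * sqrt t)"
  shows "m / (2 * sqrt t) + M * sqrt t / sqrt e = b"
    and "m * (1 / (2 * sqrt t)) + M * sqrt t / sqrt e = b"
    and "M * m / sqrt e + M^2 * t / e = M / e"
    and "M / e + (m / (2 * sqrt t))^2 = b^2"
proof -
  define r q where "r = sqrt e" and "q = sqrt t"
  have r: "0 < r" and q: "0 < q" using e t by (auto simp: r_def q_def)
  have er: "e = r^2" and tq: "t = q^2" using e t by (auto simp: r_def q_def)
  have m: "m = (1 - M * q^2) / r" using M_pos r by (simp add: m_def mm_def r_def[symmetric] tq field_simps)
  have bb: "b = (1 + M * q^2) / (2 * r * q)" using q by (simp add: b_def r_def[symmetric] q_def[symmetric] tq)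
  show "m / (2 * sqrt t) + M * sqrt t / sqrt e = b"
    unfolding r_def[symmetric] q_def[symmetric] m bb using r q by (simp add: field_simps power2_eq_square)
  show "m * (1 / (2 * sqrt t)) + M * sqrt t / sqrt e = b"
    unfolding r_def[symmetric] q_def[symmetric] m bb using r q by (simp add: field_simps power2_eq_square)
  show "M * m / sqrt e + M^2 * t / e = M / e"
    unfolding r_def[symmetric] m er tq using r q by (simp add: field_simps power2_eq_square)
  show "M / e + (m / (2 * sqrt t))^2 = b^2"
    unfolding q_def[symmetric] m bb er using r q by (simp add: field_simps power2_eq_square)
qed

lemma bl_exps:
  assumes e: "0 < e" and t: "0 < t"
  defines "m \<equiv> mm e t" and "b \<equiv> (1 + M * t) / (2 * sqrt e * sqrt t)"
  shows "exp (- M / e) * Hf M e t m = 1"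
    and "exp (- M / e) * E0f t m = exp (- (b^2))"
    and "Ef M e t m = exp (- (b^2))"
    and "Gf M e t m = exp (- (b^2)) * Et b"
proof -
  note A = bl_alg[OF e t, folded m_def b_def]
  show "exp (- M / e) * Hf M e t m = 1"
    unfolding Hf_def A(3) by (simp add: exp_add[symmetric])
  show "exp (- M / e) * E0f t m = exp (- (b^2))"
    unfolding E0f_def A(4)[symmetric] by (simp add: exp_add[symmetric])
  show "Ef M e t m = exp (- (b^2))"
    unfolding Ef_def A(1) ..
  show "Gf M e t m = exp (- (b^2)) * Et b"
    unfolding Gf_def A(1) by (rule erfc_Et)
qed

definition "gb12 x = (cm - cp) / 2 * (- (2 / sqrt pi * iB x)) + (cm - cp) / 2 * (aB x * Et (bB x) - 2 / sqrt pi * iB x)"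
definition "gCC x = (cm - cp) / 2 * (2 * (2 / sqrt pi) * mx x * iB x ^ 3)
   + (cm - cp) / 2 * (aB x ^ 2 * Et (bB x) - 2 * aB x * (2 / sqrt pi) * iB x + 2 * (2 / sqrt pi) * bB x * iB x ^ 2)"
definition "gCt x = (dp - dm) / 2 * (2 / sqrt pi * iB x)"
definition "gDt x = - ((cm - cp) / 2 * (2 * (2 / sqrt pi) * iB x ^ 3 * (1 - 2 * mx x ^ 2 * iB x ^ 2))
   + (cm - cp) / 2 * (aB x ^ 3 * Et (bB x) - 3 * aB x ^ 2 * (2 / sqrt pi) * iB x
      + 6 * aB x * (2 / sqrt pi) * bB x * iB x ^ 2 + 2 * (2 / sqrt pi) * (1 - 2 * bB x ^ 2) * iB x ^ 3))"
definition "BBP x = - dxY0 (snd x) - ((dp - dm) / 2 * erf (mx x / (2 * sqrt (snd x))) + (dp + dm) / 2) + ds (snd x)"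
definition "BtP x = - (mx x * ((ep - em) / 2 * erf (mx x / (2 * sqrt (snd x))) + (ep + em) / 2)
     + (ep - em) * sqrt (snd x / pi) * exp (- (mx x ^ 2) / (4 * snd x))) + mx x * es (snd x)"

lemma coef_ids:
  assumes x: "x \<in> D"
  defines "e \<equiv> fst x" and "t \<equiv> snd x"
  shows "exp (- M / e) * a0 e t = exp (- M / e) * (Y0f 1 t + W0 cp cm (mx x) t - cs t) + exp (- (bB x ^ 2)) * ((cm - cp) / 2 * Et (bB x))"
    and "exp (- M / e) * b12 e t = exp (- (bB x ^ 2)) * gb12 x"
    and "BB e t = BBP x"
    and "exp (- M / e) * CC e t = exp (- (bB x ^ 2)) * gCC x"
    and "Bt e t = BtP x"
    and "exp (- M / e) * Ct e t = exp (- (bB x ^ 2)) * gCt x"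
    and "exp (- M / e) * Dt e t = exp (- (bB x ^ 2)) * gDt x"
proof -
  have e: "0 < e" and t: "0 < t" using x by (auto simp: D_def e_def t_def)
  have bx: "bB x = (1 + M * t) / (2 * sqrt e * sqrt t)" by (simp add: bB_def e_def t_def)
  have mxx: "mx x = mm e t" by (simp add: mx_def e_def t_def)
  have ix: "iB x = 1 / (2 * sqrt t)" by (simp add: iB_def t_def)
  have ax: "aB x = M / sqrt e" by (simp add: aB_def e_def)
  note X = bl_exps[OF e t, folded bx mxx]
  note A = bl_alg[OF e t, folded bx mxx]
  note d0 = W0e_derivs[OF e t, of M cp cm "mx x"]
  show "exp (- M / e) * a0 e t = exp (- M / e) * (Y0f 1 t + W0 cp cm (mx x) t - cs t) + exp (- (bB x ^ 2)) * ((cm - cp) / 2 * Et (bB x))"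
  proof -
    have "exp (- M / e) * a0 e t = exp (- M / e) * (Y0f 1 t + W0 cp cm (mx x) t - cs t) + (cm - cp) / 2 * (exp (- M / e) * Hf M e t (mx x)) * Gf M e t (mx x)"
      unfolding a0_def W0e_def U0_def Hf_def Gf_def mxx by (simp add: algebra_simps)
    then show ?thesis unfolding X by simp
  qed
  show "exp (- M / e) * b12 e t = exp (- (bB x ^ 2)) * gb12 x"
  proof -
    have "exp (- M / e) * b12 e t = (cm - cp) / 2 * (- (2 / sqrt pi * (1 / (2 * sqrt t)) * (exp (- M / e) * E0f t (mx x))))
       + (cm - cp) / 2 * ((exp (- M / e) * Hf M e t (mx x)) * (M / sqrt e * Gf M e t (mx x) - 2 / sqrt pi * (1 / (2 * sqrt t)) * Ef M e t (mx x)))"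
      unfolding b12_def mxx[symmetric] d0 by (simp add: algebra_simps)
    then show ?thesis unfolding X gb12_def ix ax by (simp add: algebra_simps)
  qed
  show "BB e t = BBP x"
    using W12_derivs(1)[OF t, of dp dm "mm e t"] by (simp add: BB_def BBP_def mxx t_def)
  show "exp (- M / e) * CC e t = exp (- (bB x ^ 2)) * gCC x"
  proof -
    have "exp (- M / e) * CC e t = (cm - cp) / 2 * (2 * (2 / sqrt pi) * mx x * (1 / (2 * sqrt t))^3 * (exp (- M / e) * E0f t (mx x)))
       + (cm - cp) / 2 * ((exp (- M / e) * Hf M e t (mx x)) * ((M / sqrt e)^2 * Gf M e t (mx x) - 2 * (M / sqrt e) * (2 / sqrt pi) * (1 / (2 * sqrt t)) * Ef M e t (mx x)
         + 2 * (2 / sqrt pi) * (mx x * (1 / (2 * sqrt t)) + M * sqrt t / sqrt e) * (1 / (2 * sqrt t))^2 * Ef M e t (mx x)))"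
      unfolding CC_def mxx[symmetric] d0 by (simp add: algebra_simps)
    then show ?thesis unfolding X A(2) gCC_def ix ax by (simp add: algebra_simps)
  qed
  show "Bt e t = BtP x"
    using W1_deriv[OF t, of ep em "mm e t"] by (simp add: Bt_def BtP_def mxx t_def)
  show "exp (- M / e) * Ct e t = exp (- (bB x ^ 2)) * gCt x"
  proof -
    have "exp (- M / e) * Ct e t = (dp - dm) / 2 * (2 / sqrt pi * (exp (- M / e) * E0f t (mx x)) * (1 / (2 * sqrt t)))"
      unfolding Ct_def mxx[symmetric] W12_derivs(2)[OF t] by (simp add: algebra_simps)
    then show ?thesis unfolding X gCt_def ix by (simp add: algebra_simps)
  qed
  show "exp (- M / e) * Dt e t = exp (- (bB x ^ 2)) * gDt x"
  proof -
    have "exp (- M / e) * Dt e t = - ((cm - cp) / 2 * (2 * (2 / sqrt pi) * (1 / (2 * sqrt t))^3 * (1 - 2 * mx x^2 * (1 / (2 * sqrt t))^2) * (exp (- M / e) * E0f t (mx x)))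
       + (cm - cp) / 2 * ((exp (- M / e) * Hf M e t (mx x)) * ((M / sqrt e)^3 * Gf M e t (mx x)
        - 3 * (M / sqrt e)^2 * (2 / sqrt pi) * (1 / (2 * sqrt t)) * Ef M e t (mx x)
        + 6 * (M / sqrt e) * (2 / sqrt pi) * (mx x * (1 / (2 * sqrt t)) + M * sqrt t / sqrt e) * (1 / (2 * sqrt t))^2 * Ef M e t (mx x)
        + 2 * (2 / sqrt pi) * (1 - 2 * (mx x * (1 / (2 * sqrt t)) + M * sqrt t / sqrt e)^2) * (1 / (2 * sqrt t))^3 * Ef M e t (mx x))))"
      unfolding Dt_def mxx[symmetric] d0 by (simp add: algebra_simps)
    then show ?thesis unfolding X A(2) gDt_def ix ax by (simp add: algebra_simps)
  qed
qed

definition "GPf x = - (Y0f 1 (snd x) + W0 cp cm (mx x) (snd x) - cs (snd x)) - sqrt (fst x) * a12 (fst x) (snd x)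
   - fst x * AA (fst x) (snd x) + BBP x - fst x powr (3/2) * At (fst x) (snd x) + sqrt (fst x) * BtP x"
definition "GGf x = - ((cm - cp) / 2 * Et (bB x)) - LB x * gb12 x - (LB x)^2 / 2 * gCC x - LB x / 2 * gCt x + (LB x)^3 / 6 * gDt x"

lemma BL_id:
  assumes x: "x \<in> D"
  shows "exp (- M * ((1 - 0) / fst x)) * BL (fst x) (snd x) ((1 - 0) / fst x) = exp (- M / fst x) * GPf x + exp (- (bB x ^ 2)) * GGf x"
proof -
  define e t where "e = fst x" and "t = snd x"
  have e: "0 < e" and t: "0 < t" using x by (auto simp: D_def e_def t_def)
  define z where "z = 1 / e"
  note C = coef_ids[OF x, folded e_def t_def]
  have "exp (- M * ((1 - 0) / e)) * BL e t ((1 - 0) / e) =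
     - (exp (- M / e) * a0 e t) - sqrt e * (exp (- M / e) * a12 e t + (exp (- M / e) * b12 e t) * z)
     + e * (- (exp (- M / e) * AA e t) + BB e t * exp (- M / e) * z - (exp (- M / e) * CC e t) * z^2 / 2)
     + e powr (3/2) * (- (exp (- M / e) * At e t) + Bt e t * exp (- M / e) * z - (exp (- M / e) * Ct e t) * z^2 / 2
        + (exp (- M / e) * Dt e t) * z^3 / 6)"
    by (simp add: BL_def z_def algebra_simps)
  also have "\<dots> = exp (- M / e) * GPf x + exp (- (bB x ^ 2)) * GGf x"
  proof -
    define r where "r = sqrt e"
    have r: "0 < r" using e by (simp add: r_def)
    have er: "e = r^2" using e by (simp add: r_def)
    have pw: "e powr (3/2) = r^3" using powr_32[OF r] er by simp
    have lb: "LB x = 1 / r" by (simp add: LB_def r_def e_def)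
    show ?thesis
      unfolding C GPf_def GGf_def e_def[symmetric] t_def[symmetric] lb pw r_def[symmetric] z_def
      unfolding er using r by (simp add: field_simps power2_eq_square power3_eq_cube)
  qed
  finally show ?thesis by (simp add: e_def t_def)
qed

lemma C4_bounds:
  assumes "C4_on {a..b} f f1 f2 f3 f4"
  shows "\<exists>B. \<forall>y\<in>{a..b}. \<bar>f y\<bar> \<le> B \<and> \<bar>f1 y\<bar> \<le> B \<and> \<bar>f2 y\<bar> \<le> B"
proof -
  have c: "continuous_on {a..b} g" if "\<forall>y\<in>{a..b}. (g has_real_derivative g' y) (at y within {a..b})" for g g'
    using that by (auto simp: continuous_on_eq_continuous_within intro: DERIV_continuous)
  have cf: "continuous_on {a..b} f" "continuous_on {a..b} f1" "continuous_on {a..b} f2"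
    using assms unfolding C4_on_def by (auto intro!: c)
  have bd: "\<exists>B. \<forall>y\<in>{a..b}. \<bar>g y\<bar> \<le> B" if "continuous_on {a..b} g" for g :: "real \<Rightarrow> real"
  proof -
    have "bounded (g ` {a..b})" using compact_continuous_image[OF that compact_Icc] by (rule compact_imp_bounded)
    then show ?thesis unfolding bounded_iff by auto
  qed
  obtain B0 B1 B2 where "\<forall>y\<in>{a..b}. \<bar>f y\<bar> \<le> B0" "\<forall>y\<in>{a..b}. \<bar>f1 y\<bar> \<le> B1" "\<forall>y\<in>{a..b}. \<bar>f2 y\<bar> \<le> B2"
    using bd[OF cf(1)] bd[OF cf(2)] bd[OF cf(3)] by blast
  then show ?thesis by (intro exI[of _ "max B0 (max B1 B2)"]) (auto simp: le_max_iff_disj)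
qed

lemma data_bounds:
  "\<exists>B. (\<forall>y\<in>{0..1}. \<bar>y0 y\<bar> \<le> B \<and> \<bar>y0' y\<bar> \<le> B \<and> \<bar>y0'' y\<bar> \<le> B) \<and>
       (\<forall>y\<in>{0..T}. \<bar>v y\<bar> \<le> B \<and> \<bar>v' y\<bar> \<le> B \<and> \<bar>v'' y\<bar> \<le> B)"
proof -
  obtain B1 where B1: "\<forall>y\<in>{0..1}. \<bar>y0 y\<bar> \<le> B1 \<and> \<bar>y0' y\<bar> \<le> B1 \<and> \<bar>y0'' y\<bar> \<le> B1"
    using C4_bounds[OF y0_C4] by blast
  obtain B2 where B2: "\<forall>y\<in>{0..T}. \<bar>v y\<bar> \<le> B2 \<and> \<bar>v' y\<bar> \<le> B2 \<and> \<bar>v'' y\<bar> \<le> B2"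
    using C4_bounds[OF v_C4] by blast
  show ?thesis using B1 B2 by (intro exI[of _ "max B1 B2"]) (auto simp: le_max_iff_disj)
qed

lemma LB_nn: "\<forall>x\<in>D. 0 \<le> LB x" by (auto simp: D_def LB_def)
lemma bB_nn: "\<forall>x\<in>D. 0 \<le> bB x" using M_pos by (auto simp: D_def bB_def)
lemma snd4_pos: "\<forall>x\<in>D. 0 < 4 * snd x" by (auto simp: D_def)

lemma T_pos: "0 < T" using T_ge M_pos by (smt (verit) divide_pos_pos)

lemma leaves_LB:
  shows "pb LB D 0 (\<lambda>x. Y0f 1 (snd x))" "pb LB D 0 (\<lambda>x. Y1f 1 (snd x))" "pb LB D 0 (\<lambda>x. dxY0 (snd x))"
    "pb LB D 0 (\<lambda>x. cs (snd x))" "pb LB D 0 (\<lambda>x. ds (snd x))" "pb LB D 0 (\<lambda>x. es (snd x))"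
    "pb LB D 0 (\<lambda>x. fs (snd x))" "pb LB D 0 (\<lambda>x. hs (snd x))"
    "pb LB D 0 (\<lambda>x. snd x)" "pb LB D 0 (\<lambda>x. sqrt (snd x / pi))" "pb LB D 0 (\<lambda>x. sqrt (fst x))"
    "pb LB D 0 (\<lambda>x. fst x powr (3/2))" "pb LB D 1 mx"
proof -
  obtain B where B: "\<forall>y\<in>{0..1}. \<bar>y0 y\<bar> \<le> B \<and> \<bar>y0' y\<bar> \<le> B \<and> \<bar>y0'' y\<bar> \<le> B"
       "\<forall>y\<in>{0..T}. \<bar>v y\<bar> \<le> B \<and> \<bar>v' y\<bar> \<le> B \<and> \<bar>v'' y\<bar> \<le> B"
    using data_bounds by blast
  have M: "0 < M" by (rule M_pos)
  have rng1: "1 - M * t \<in> {0..1}" if "1 > M * t" "0 < t" for t using that M by auto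
  have rng2: "t - 1 / M \<in> {0..T}" if "\<not> 1 > M * t" "t \<le> T" for t
  proof -
    have a: "1 / M \<le> t" using that M by (simp add: field_simps)
    have b: "0 < 1 / M" using M by simp
    have c: "t - 1 / M \<le> T" using b that(2) by linarith
    show ?thesis using a c by simp
  qed
  have rng3: "t - 1 / M \<in> {0..T}" if "\<not> M * t < 1" "t \<le> T" for t
    using rng2[of t] that by auto
  show "pb LB D 0 (\<lambda>x. Y0f 1 (snd x))"
  proof (rule pb_boundedI[OF LB_nn, where C=B])
    fix x :: "real \<times> real" assume "x \<in> D"
    then show "\<bar>Y0f 1 (snd x)\<bar> \<le> B" using B rng1[of "snd x"] rng2[of "snd x"] by (auto simp: D_def Y0f_def)
  qed
  show "pb LB D 0 (\<lambda>x. Y1f 1 (snd x))"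
  proof (rule pb_boundedI[OF LB_nn, where C="T * B + B / M^3"])
    fix x :: "real \<times> real" assume x: "x \<in> D"
    have B0: "0 \<le> B" using B(1) by force
    show "\<bar>Y1f 1 (snd x)\<bar> \<le> T * B + B / M^3"
    proof (cases "1 > M * snd x")
      case True
      have "\<bar>snd x * y0'' (1 - M * snd x)\<bar> \<le> T * B"
        unfolding abs_mult using x B rng1[OF True] by (intro mult_mono) (auto simp: D_def)
      moreover have "0 \<le> B / M^3" using B0 M by simp
      ultimately show ?thesis using True by (simp add: Y1f_def)
    next
      case False
      have "\<bar>1 / M^3 * v'' (snd x - 1 / M)\<bar> \<le> B / M^3"
        using x B rng2[OF False] M by (auto simp: D_def abs_mult divide_right_mono)
      moreover have "0 \<le> T * B" using B0 T_pos by simp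
      ultimately show ?thesis using False by (simp add: Y1f_def)
    qed
  qed
  show "pb LB D 0 (\<lambda>x. dxY0 (snd x))"
  proof (rule pb_boundedI[OF LB_nn, where C="B + B / M"])
    fix x :: "real \<times> real" assume x: "x \<in> D"
    have B0: "0 \<le> B" using B(1) by force
    show "\<bar>dxY0 (snd x)\<bar> \<le> B + B / M"
    proof (cases "M * snd x < 1")
      case True
      then show ?thesis using x B rng1[of "snd x"] B0 M by (auto simp: D_def dxY0_def intro: add_increasing2)
    next
      case False
      have "\<bar>v' (snd x - 1 / M)\<bar> / M \<le> B / M" using x B rng3[OF False] M by (auto simp: D_def divide_right_mono)
      then show ?thesis using False B0 M by (simp add: dxY0_def abs_divide)
    qed
  qed
  show "pb LB D 0 (\<lambda>x. cs (snd x))" by (rule pb_boundedI[OF LB_nn, where C="\<bar>cp\<bar> + \<bar>cm\<bar>"]) (auto simp: cs_def)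
  show "pb LB D 0 (\<lambda>x. ds (snd x))" by (rule pb_boundedI[OF LB_nn, where C="\<bar>dp\<bar> + \<bar>dm\<bar>"]) (auto simp: ds_def)
  show "pb LB D 0 (\<lambda>x. es (snd x))" by (rule pb_boundedI[OF LB_nn, where C="\<bar>ep\<bar> + \<bar>em\<bar>"]) (auto simp: es_def)
  show "pb LB D 0 (\<lambda>x. fs (snd x))" by (rule pb_boundedI[OF LB_nn, where C="\<bar>fm\<bar>"]) (auto simp: fs_def)
  show "pb LB D 0 (\<lambda>x. hs (snd x))" by (rule pb_boundedI[OF LB_nn, where C="\<bar>hp\<bar> + \<bar>hm\<bar>"]) (auto simp: hs_def)
  show "pb LB D 0 (\<lambda>x. snd x)" by (rule pb_boundedI[OF LB_nn, where C="T"]) (auto simp: D_def)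
  show "pb LB D 0 (\<lambda>x. sqrt (snd x / pi))"
  proof (rule pb_boundedI[OF LB_nn, where C="sqrt T"])
    fix x :: "real \<times> real" assume x: "x \<in> D"
    have "snd x / pi \<le> snd x / 1" using x pi_gt3 by (intro divide_left_mono) (auto simp: D_def)
    then have "snd x / pi \<le> T" using x by (auto simp: D_def)
    moreover have "0 \<le> snd x / pi" using x by (auto simp: D_def)
    ultimately show "\<bar>sqrt (snd x / pi)\<bar> \<le> sqrt T" by simp
  qed
  show "pb LB D 0 (\<lambda>x. sqrt (fst x))" by (rule pb_boundedI[OF LB_nn, where C=1]) (auto simp: D_def)
  show "pb LB D 0 (\<lambda>x. fst x powr (3/2))"
  proof (rule pb_boundedI[OF LB_nn, where C=1])
    fix x :: "real \<times> real" assume x: "x \<in> D"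
    then have "fst x powr (3/2) \<le> 1" by (intro powr_le1) (auto simp: D_def)
    then show "\<bar>fst x powr (3/2)\<bar> \<le> 1" by simp
  qed
  show "pb LB D 1 mx"
  proof (rule pb_linI[OF LB_nn, where C="1 + M * T"])
    fix x :: "real \<times> real" assume x: "x \<in> D"
    have e: "0 < fst x" using x by (auto simp: D_def)
    have eq: "mx x = (1 - M * snd x) * LB x" using M e by (simp add: mx_def mm_def LB_def field_simps)
    have "\<bar>1 - M * snd x\<bar> \<le> 1 + M * T"
    proof -
      have "M * snd x \<le> M * T" "0 \<le> M * snd x" using x M by (auto simp: D_def intro: mult_left_mono)
      then show ?thesis by (simp add: abs_le_iff)
    qed
    then have "\<bar>mx x\<bar> \<le> (1 + M * T) * LB x" unfolding eq abs_mult using LB_nn x by (auto intro: mult_right_mono)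
    also have "\<dots> \<le> (1 + M * T) * (1 + LB x)" using M T_pos by (intro mult_left_mono) auto
    finally show "\<bar>mx x\<bar> \<le> (1 + M * T) * (1 + LB x)" .
  qed
qed

lemma GP_pb: "\<exists>N. pb LB D N GPf"
  unfolding GPf_def[abs_def] a12_def AA_def At_def W0_def BBP_def BtP_def W12_def W1_def W32_def mx_def[symmetric]
  apply (rule exI)
  apply (rule LB_nn snd4_pos leaves_LB pb_fst[OF LB_nn] pb_erf[OF LB_nn] pb_erfc[OF LB_nn] pb_expsq2[OF LB_nn] pb_intros)+
  done

lemma sqrtM_le: assumes x: "x \<in> D" shows "sqrt M * LB x \<le> bB x"
proof -
  define r q where "r = sqrt (fst x)" and "q = sqrt (snd x)"
  have r: "0 < r" and q: "0 < q" using x by (auto simp: D_def r_def q_def)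
  have t: "snd x = q^2" using x by (auto simp: D_def q_def)
  have sM: "M = (sqrt M)^2" using M_pos by simp
  have "0 \<le> (sqrt M * q - 1)^2" by simp
  then have "2 * sqrt M * q \<le> 1 + M * q^2"
    by (subst sM) (simp add: power2_eq_square algebra_simps)
  then have "sqrt M / r \<le> (1 + M * q^2) / (2 * r * q)"
    using r q by (simp add: field_simps)
  then show ?thesis using q by (simp add: LB_def bB_def r_def[symmetric] q_def[symmetric] t)
qed

lemma leaves_bB:
  shows "pb bB D 1 LB" "pb bB D 1 iB" "pb bB D 1 aB" "pb bB D 1 mx"
proof -
  have sM: "0 < sqrt M" using M_pos by simp
  have LBle: "LB x \<le> bB x / sqrt M" if "x \<in> D" for x
    using sqrtM_le[OF that] sM by (simp add: field_simps)
  have LB0: "0 \<le> LB x" if "x \<in> D" for x using LB_nn that by auto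
  have b0: "0 \<le> bB x" if "x \<in> D" for x using bB_nn that by auto
  show "pb bB D 1 LB"
  proof (rule pb_linI[OF bB_nn, where C="1 / sqrt M"])
    fix x :: "real \<times> real" assume x: "x \<in> D"
    have "\<bar>LB x\<bar> \<le> bB x / sqrt M" using LBle[OF x] LB0[OF x] by simp
    also have "\<dots> \<le> 1 / sqrt M * (1 + bB x)" using sM by (simp add: field_simps)
    finally show "\<bar>LB x\<bar> \<le> 1 / sqrt M * (1 + bB x)" .
  qed
  show "pb bB D 1 iB"
  proof (rule pb_linI[OF bB_nn, where C=1])
    fix x :: "real \<times> real" assume x: "x \<in> D"
    define r q where "r = sqrt (fst x)" and "q = sqrt (snd x)"
    have r: "0 < r" "r \<le> 1" and q: "0 < q" using x by (auto simp: D_def r_def q_def)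
    have t: "snd x = q^2" using x by (auto simp: D_def q_def)
    have "1 / (2 * q) \<le> 1 / (2 * r * q)" using r q by (intro divide_left_mono) (auto intro: mult_right_le_one_le)
    also have "\<dots> \<le> (1 + M * q^2) / (2 * r * q)" using r q M_pos by (intro divide_right_mono) auto
    finally have "iB x \<le> bB x" using q by (simp add: iB_def bB_def r_def[symmetric] q_def[symmetric] t)
    then show "\<bar>iB x\<bar> \<le> 1 * (1 + bB x)" using q by (simp add: iB_def q_def[symmetric])
  qed
  show "pb bB D 1 aB"
  proof (rule pb_linI[OF bB_nn, where C="sqrt M"])
    fix x :: "real \<times> real" assume x: "x \<in> D"
    have "aB x = sqrt M * (sqrt M * LB x)" using M_pos by (simp add: aB_def LB_def mult.assoc[symmetric])
    then have "\<bar>aB x\<bar> \<le> sqrt M * bB x" using sqrtM_le[OF x] sM LB0[OF x] by (simp add: abs_mult)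
    also have "\<dots> \<le> sqrt M * (1 + bB x)" using sM by simp
    finally show "\<bar>aB x\<bar> \<le> sqrt M * (1 + bB x)" .
  qed
  show "pb bB D 1 mx"
  proof (rule pb_linI[OF bB_nn, where C="(1 + M * T) / sqrt M"])
    fix x :: "real \<times> real" assume x: "x \<in> D"
    have e: "0 < fst x" using x by (auto simp: D_def)
    have eq: "mx x = (1 - M * snd x) * LB x" using M_pos e by (simp add: mx_def mm_def LB_def field_simps)
    have "\<bar>1 - M * snd x\<bar> \<le> 1 + M * T"
    proof -
      have "M * snd x \<le> M * T" "0 \<le> M * snd x" using x M_pos by (auto simp: D_def intro: mult_left_mono)
      then show ?thesis by (simp add: abs_le_iff)
    qed
    then have "\<bar>mx x\<bar> \<le> (1 + M * T) * LB x" unfolding eq abs_mult using LB0[OF x] by (auto intro: mult_right_mono)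
    also have "\<dots> \<le> (1 + M * T) * (bB x / sqrt M)" using LBle[OF x] M_pos T_pos by (intro mult_left_mono) auto
    also have "\<dots> \<le> (1 + M * T) / sqrt M * (1 + bB x)" using M_pos T_pos sM by (simp add: field_simps)
    finally show "\<bar>mx x\<bar> \<le> (1 + M * T) / sqrt M * (1 + bB x)" .
  qed
qed

lemma GG_pb: "\<exists>N. pb bB D N GGf"
  unfolding GGf_def[abs_def] gb12_def gCC_def gCt_def gDt_def
  apply (rule exI)
  apply (rule bB_nn leaves_bB pb_Et[OF bB_nn bB_nn] pb_base[OF bB_nn] pb_intros)+
  done

lemma decay_K0: "\<bar>a\<bar> \<le> K / (1 + y)^12 \<Longrightarrow> 0 \<le> (y::real) \<Longrightarrow> 0 \<le> K"
proof -
  assume h: "\<bar>a\<bar> \<le> K / (1 + y)^12" "0 \<le> y"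
  have "0 \<le> K / (1 + y)^12" using h(1) abs_ge_zero order_trans by blast
  moreover have "0 < (1 + y)^12" using h(2) by simp
  ultimately show ?thesis by (simp add: zero_le_divide_iff)
qed

lemma P_to_e6:
  assumes "pb LB D N g"
  shows "\<exists>K. \<forall>x\<in>D. \<bar>exp (- M / fst x) * g x\<bar> \<le> K * (fst x)^6"
proof -
  obtain K where K: "\<forall>x\<in>D. \<bar>exp (- (M * (LB x)^2)) * g x\<bar> \<le> K / (1 + LB x)^12"
    using pb_decay[OF assms M_pos] by blast
  show ?thesis
  proof (intro exI[of _ K] ballI)
    fix x :: "real \<times> real" assume x: "x \<in> D"
    have e: "0 < fst x" using x by (auto simp: D_def)
    have L0: "0 < LB x" using e by (simp add: LB_def)
    have L2: "(LB x)^2 = 1 / fst x" using e by (simp add: LB_def power_divide)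
    have K0: "0 \<le> K" using decay_K0[of _ K "LB x"] K x L0 by auto
    have "\<bar>exp (- M / fst x) * g x\<bar> \<le> K / (1 + LB x)^12" using K x L2 by auto
    also have "\<dots> \<le> K / (LB x)^12" using K0 L0 by (intro divide_left_mono power_mono) auto
    also have "(LB x)^12 = 1 / (fst x)^6" using L2 by (metis power_mult power_one_over numeral_Bit0 numeral_One mult_2 add_2_eq_Suc' power2_eq_square)
    finally show "\<bar>exp (- M / fst x) * g x\<bar> \<le> K * (fst x)^6" by simp
  qed
qed

lemma G_to_e6:
  assumes "pb bB D N g"
  shows "\<exists>K. \<forall>x\<in>D. \<bar>exp (- (bB x ^ 2)) * g x\<bar> \<le> K * (fst x)^6"
proof -
  obtain K where K: "\<forall>x\<in>D. \<bar>exp (- (1 * (bB x)^2)) * g x\<bar> \<le> K / (1 + bB x)^12"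
    using pb_decay[OF assms, of 1] by auto
  show ?thesis
  proof (intro exI[of _ "K / M^6"] ballI)
    fix x :: "real \<times> real" assume x: "x \<in> D"
    have e: "0 < fst x" using x by (auto simp: D_def)
    have b0: "0 \<le> bB x" using bB_nn x by auto
    have K0: "0 \<le> K" using decay_K0[of _ K "bB x"] K x b0 by auto
    have L: "sqrt M * LB x \<le> bB x" by (rule sqrtM_le[OF x])
    have "M / fst x = (sqrt M * LB x)^2" using M_pos e by (simp add: LB_def power_mult_distrib power_divide)
    also have "\<dots> \<le> (bB x)^2" using L M_pos e by (intro power_mono) (auto simp: LB_def)
    finally have b2: "M / fst x \<le> (bB x)^2" .
    have Me: "0 < M / fst x" using M_pos e by simp
    have b12: "(M / fst x)^6 \<le> (bB x)^12"
      using power_mono[OF b2, of 6] Me by (simp add: power_mult[symmetric])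
    have bpos: "0 < bB x" using b2 Me b0 by (cases "bB x = 0") auto
    have "\<bar>exp (- (bB x ^ 2)) * g x\<bar> \<le> K / (1 + bB x)^12" using K x by auto
    also have "\<dots> \<le> K / (bB x)^12" using K0 bpos by (intro divide_left_mono power_mono) auto
    also have "\<dots> \<le> K / (M / fst x)^6" using K0 Me b12 bpos by (intro divide_left_mono) (auto intro!: mult_pos_pos)
    also have "\<dots> = K / M^6 * (fst x)^6" using e M_pos by (simp add: power_divide field_simps)
    finally show "\<bar>exp (- (bB x ^ 2)) * g x\<bar> \<le> K / M^6 * (fst x)^6" .
  qed
qed

lemma BL_bound: "\<exists>K. \<forall>x\<in>D. \<bar>exp (- M * ((1 - 0) / fst x)) * BL (fst x) (snd x) ((1 - 0) / fst x)\<bar> \<le> K * (fst x)^3 / (fst x + snd x)^2"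
proof -
  obtain N1 N2 where "pb LB D N1 GPf" "pb bB D N2 GGf" using GP_pb GG_pb by blast
  then obtain K1 K2 where K1: "\<forall>x\<in>D. \<bar>exp (- M / fst x) * GPf x\<bar> \<le> K1 * (fst x)^6"
    and K2: "\<forall>x\<in>D. \<bar>exp (- (bB x ^ 2)) * GGf x\<bar> \<le> K2 * (fst x)^6"
    using P_to_e6 G_to_e6 by metis
  show ?thesis
  proof (intro exI[of _ "(\<bar>K1\<bar> + \<bar>K2\<bar>) * (1 + T)^2"] ballI)
    fix x :: "real \<times> real" assume x: "x \<in> D"
    define e t where "e = fst x" and "t = snd x"
    have e: "0 < e" "e < 1" and t: "0 < t" "t \<le> T" using x by (auto simp: D_def e_def t_def)
    have "\<bar>exp (- M * ((1 - 0) / e)) * BL e t ((1 - 0) / e)\<bar> \<le> \<bar>exp (- M / e) * GPf x\<bar> + \<bar>exp (- (bB x ^ 2)) * GGf x\<bar>"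
      using BL_id[OF x] by (simp add: e_def t_def)
    also have "\<dots> \<le> K1 * e^6 + K2 * e^6" using K1 K2 x by (auto simp: e_def intro: add_mono)
    also have "\<dots> \<le> (\<bar>K1\<bar> + \<bar>K2\<bar>) * e^3 * e^3"
      by (simp add: algebra_simps power_add[symmetric] add_mono mult_right_mono e)
    also have "\<dots> \<le> (\<bar>K1\<bar> + \<bar>K2\<bar>) * e^3 * 1" using e by (intro mult_left_mono) (auto simp: power_le_one)
    also have "\<dots> \<le> (\<bar>K1\<bar> + \<bar>K2\<bar>) * e^3 * ((1 + T)^2 / (e + t)^2)"
    proof (intro mult_left_mono)
      have "(e + t)^2 \<le> (1 + T)^2" using e t by (intro power_mono) auto
      then show "1 \<le> (1 + T)^2 / (e + t)^2" using e t by (simp add: field_simps)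
    qed (use e in auto)
    also have "\<dots> = (\<bar>K1\<bar> + \<bar>K2\<bar>) * (1 + T)^2 * e^3 / (e + t)^2" by simp
    finally show "\<bar>exp (- M * ((1 - 0) / fst x)) * BL (fst x) (snd x) ((1 - 0) / fst x)\<bar> \<le> (\<bar>K1\<bar> + \<bar>K2\<bar>) * (1 + T)^2 * (fst x)^3 / (fst x + snd x)^2"
      by (simp add: e_def t_def)
  qed
qed

lemma point_bound: "\<exists>K\<ge>0. \<forall>e t. 0 < e \<and> e < 1 \<and> 0 < t \<and> t \<le> T \<longrightarrow>
    \<bar>Ptilde M y0 y0' y0'' y0''' v v' v'' v''' e 0 t - v t\<bar> \<le> K * e^3 / (e + t)^2"
proof -
  obtain K1 where K1: "\<forall>x\<in>D. \<bar>mainpart (fst x) (snd x)\<bar> \<le> K1 * (fst x)^3 / (fst x + snd x)^2"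
    using main_bound by blast
  obtain K2 where K2: "\<forall>x\<in>D. \<bar>exp (- M * ((1 - 0) / fst x)) * BL (fst x) (snd x) ((1 - 0) / fst x)\<bar> \<le> K2 * (fst x)^3 / (fst x + snd x)^2"
    using BL_bound by blast
  show ?thesis
  proof (intro exI[of _ "\<bar>K1\<bar> + \<bar>K2\<bar>"] conjI allI impI)
    fix e t :: real assume h: "0 < e \<and> e < 1 \<and> 0 < t \<and> t \<le> T"
    then have x: "(e, t) \<in> D" by (simp add: D_def)
    have q: "0 < e^3 / (e + t)^2" using h by simp
    have "Ptilde M y0 y0' y0'' y0''' v v' v'' v''' e 0 t - v t = mainpart e t + exp (- M * ((1 - 0) / e)) * BL e t ((1 - 0) / e)"
    proof -
      have P0: "Ptilde M y0 y0' y0'' y0''' v v' v'' v''' e 0 t = v t + (W0e M e cp cm ((0 - M * t) / sqrt e) t - cm)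
    + sqrt e * (W12 dp dm ((0 - M * t) / sqrt e) t - dm * ((0 - M * t) / sqrt e))
    + e * (W1 ep em ((0 - M * t) / sqrt e) t - em * (((0 - M * t) / sqrt e)^2 / 2 + t))
    + e powr (3/2) * (W32 hp hm fm ((0 - M * t) / sqrt e) t - hm * (((0 - M * t) / sqrt e)^3 + 6 * t * ((0 - M * t) / sqrt e)) - fm * ((0 - M * t) / sqrt e))
    + exp (- M * ((1 - 0) / e)) * BL e t ((1 - 0) / e)"
        by (rule Ptilde0) (use h in auto)
      show ?thesis unfolding P0 mainpart_def by simp
    qed
    then have "\<bar>Ptilde M y0 y0' y0'' y0''' v v' v'' v''' e 0 t - v t\<bar> \<le> K1 * e^3 / (e + t)^2 + K2 * e^3 / (e + t)^2"
      using K1[rule_format, OF x] K2[rule_format, OF x] by simp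
    also have "\<dots> \<le> \<bar>K1\<bar> * (e^3 / (e + t)^2) + \<bar>K2\<bar> * (e^3 / (e + t)^2)"
    proof -
      have aux: "k * e^3 / (e + t)^2 \<le> \<bar>k\<bar> * (e^3 / (e + t)^2)" for k
      proof -
        have "k * (e^3 / (e + t)^2) \<le> \<bar>k\<bar> * (e^3 / (e + t)^2)" by (rule mult_right_mono) (use q in auto)
        then show ?thesis by simp
      qed
      show ?thesis using aux[of K1] aux[of K2] by (rule add_mono)
    qed
    also have "\<dots> = (\<bar>K1\<bar> + \<bar>K2\<bar>) * e^3 / (e + t)^2" by (simp add: algebra_simps add_divide_distrib)
    finally show "\<bar>Ptilde M y0 y0' y0'' y0''' v v' v'' v''' e 0 t - v t\<bar> \<le> (\<bar>K1\<bar> + \<bar>K2\<bar>) * e^3 / (e + t)^2" .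
  qed simp
qed

lemma integral_bound:
  assumes K: "0 \<le> K" and e: "0 < e"
  shows "(\<integral>\<^sup>+ s. ennreal (K * e^3 / (e + s)^2) * indicator {0..} s \<partial>lborel) = ennreal (K * e^2)"
proof -
  have "(\<integral>\<^sup>+ s. ennreal (K * e^3 / (e + s)^2) * indicator {0..} s \<partial>lborel) = ennreal (0 - (- (K * e^3 / (e + 0))))"
  proof (rule nn_integral_FTC_atLeast)
    show "(\<lambda>s. K * e^3 / (e + s)^2) \<in> borel_measurable borel" by measurable
    show "((\<lambda>s. - (K * e^3 / (e + s))) has_real_derivative K * e^3 / (e + x)^2) (at x)" if "0 \<le> x" for x
      using that e by (auto intro!: derivative_eq_intros simp: power2_eq_square)
    show "0 \<le> K * e^3 / (e + x)^2" if "0 \<le> x" for x using K e that by simp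
    show "((\<lambda>s. - (K * e^3 / (e + s))) \<longlongrightarrow> 0) at_top"
    proof -
      have "filterlim (\<lambda>s. e + s) at_top at_top"
        by (rule filterlim_tendsto_add_at_top[OF tendsto_const filterlim_ident])
      then have "((\<lambda>s. K * e^3 / (e + s)) \<longlongrightarrow> 0) at_top"
        by (intro tendsto_divide_0[OF tendsto_const] filterlim_at_top_imp_at_infinity)
      then show ?thesis using tendsto_minus by fastforce
    qed
  qed
  also have "\<dots> = ennreal (K * e^2)" using e by (simp add: power2_eq_square power3_eq_cube)
  finally show ?thesis .
qed

lemma main_result:
  "\<exists>c::real. \<forall>eps y \<theta>.
           0 < eps \<and> eps < 1 \<and>
           adv_diff_sol eps M T v (\<lambda>_. 0) y0 y \<and>
           adv_diff_sol eps M T (\<lambda>_. 0) (\<lambda>_. 0)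
             (\<lambda>x. Lim (at_right 0) (\<lambda>t. Ptilde M y0 y0' y0'' y0''' v v' v'' v''' eps x t) - y0 x) \<theta>
           \<longrightarrow> (\<forall>t\<in>{0<..T}.
                 (\<integral>\<^sup>+ s\<in>{0<..<t}. ennreal \<bar>Ptilde M y0 y0' y0'' y0''' v v' v'' v''' eps 0 s
                                          - y 0 s - \<theta> 0 s\<bar> \<partial>lborel)
                 \<le> ennreal (c * eps^2))"
proof -
  obtain K where K0: "0 \<le> K" and K: "\<forall>e t. 0 < e \<and> e < 1 \<and> 0 < t \<and> t \<le> T \<longrightarrow>
    \<bar>Ptilde M y0 y0' y0'' y0''' v v' v'' v''' e 0 t - v t\<bar> \<le> K * e^3 / (e + t)^2"
    using point_bound by blast
  show ?thesis
  proof (intro exI[of _ K] allI impI ballI)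
    fix eps y \<theta> t
    assume h: "0 < eps \<and> eps < 1 \<and>
           adv_diff_sol eps M T v (\<lambda>_. 0) y0 y \<and>
           adv_diff_sol eps M T (\<lambda>_. 0) (\<lambda>_. 0)
             (\<lambda>x. Lim (at_right 0) (\<lambda>t. Ptilde M y0 y0' y0'' y0''' v v' v'' v''' eps x t) - y0 x) \<theta>"
      and t: "t \<in> {0<..T}"
    have yb: "\<forall>s\<in>{0<..T}. y 0 s = v s" and tb: "\<forall>s\<in>{0<..T}. \<theta> 0 s = 0"
      using h unfolding adv_diff_sol_def by auto
    have "(\<integral>\<^sup>+ s\<in>{0<..<t}. ennreal \<bar>Ptilde M y0 y0' y0'' y0''' v v' v'' v''' eps 0 s - y 0 s - \<theta> 0 s\<bar> \<partial>lborel)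
        \<le> (\<integral>\<^sup>+ s. ennreal (K * eps^3 / (eps + s)^2) * indicator {0..} s \<partial>lborel)"
    proof (rule nn_integral_mono)
      fix s
      show "ennreal \<bar>Ptilde M y0 y0' y0'' y0''' v v' v'' v''' eps 0 s - y 0 s - \<theta> 0 s\<bar> * indicator {0<..<t} s
         \<le> ennreal (K * eps^3 / (eps + s)^2) * indicator {0..} s"
      proof (cases "s \<in> {0<..<t}")
        case True
        then have s: "0 < s" "s \<le> T" using t by auto
        have "\<bar>Ptilde M y0 y0' y0'' y0''' v v' v'' v''' eps 0 s - y 0 s - \<theta> 0 s\<bar> \<le> K * eps^3 / (eps + s)^2"
          using K[rule_format, of eps s] h s yb tb by auto
        then show ?thesis using True by (auto intro: ennreal_leI)
      qed auto
    qed
    also have "\<dots> = ennreal (K * eps^2)" using integral_bound[OF K0] h by auto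
    finally show "(\<integral>\<^sup>+ s\<in>{0<..<t}. ennreal \<bar>Ptilde M y0 y0' y0'' y0''' v v' v'' v''' eps 0 s - y 0 s - \<theta> 0 s\<bar> \<partial>lborel)
        \<le> ennreal (K * eps^2)" .
  qed
qed

end

theorem lemma4p4:
  fixes M T :: real
    and y0 y0' y0'' y0''' y0'''' v v' v'' v''' v'''' :: "real \<Rightarrow> real"
  assumes M_pos: "M > 0"
    and T_ge: "T \<ge> 1 / M"
    and y0_C4: "C4_on {0..1} y0 y0' y0'' y0''' y0''''"
    and v_C4: "C4_on {0..T} v v' v'' v''' v''''"
  shows "\<exists>c::real. \<forall>eps y \<theta>.
           0 < eps \<and> eps < 1 \<and>
           adv_diff_sol eps M T v (\<lambda>_. 0) y0 y \<and>
           adv_diff_sol eps M T (\<lambda>_. 0) (\<lambda>_. 0)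
             (\<lambda>x. Lim (at_right 0) (\<lambda>t. Ptilde M y0 y0' y0'' y0''' v v' v'' v''' eps x t) - y0 x) \<theta>
           \<longrightarrow> (\<forall>t\<in>{0<..T}.
                 (\<integral>\<^sup>+ s\<in>{0<..<t}. ennreal \<bar>Ptilde M y0 y0' y0'' y0''' v v' v'' v''' eps 0 s
                                          - y 0 s - \<theta> 0 s\<bar> \<partial>lborel)
                 \<le> ennreal (c * eps^2))"
  proof -
  interpret setting M T y0 y0' y0'' y0''' y0'''' v v' v'' v''' v''''
    using M_pos T_ge y0_C4 v_C4 by (unfold_locales) auto
  show ?thesis by (rule main_result)
qed

end
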